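(* Let $\{(\hat p_h^k,\hat{\mathbf u}_h^k,\xi_h^k,\eta_h^{k+1})\}_{k=1}^N$ be a solution of Scheme-R with $\eta_h^k>0$ on $\Sigma$ for all $k=0,\dots,N+1$. Then for all $m=1,\dots,N$, $$E_h^m+\tau\sum_{k=1}^m\Big(2\mu\int_{\hat\Omega}\eta_h^k\big|(\nabla\hat{\mathbf u}_h^k(\mathbb F_h^k)^{-1})^{\rm S}\big|^2d\hat x+\gamma_3\|\partial_{x_1}\xi_h^k\|_{L^2(\Sigma)}^2+D^k_{num}\Big)=E_h^0,$$ where for $k=0,\dots,N$ $$E_h^k=\frac{\varrho_f}{2}\int_{\hat\Omega}\eta_h^k|\hat{\mathbf u}_h^k|^2d\hat x+\frac{\varrho_s}{2}\|\xi_h^k\|_{L^2(\Sigma)}^2+\frac{\gamma_1}{2}\|\partial_{x_1}\eta_h^{k+1}\|_{L^2(\Sigma)}^2+\frac{\gamma_2}{2}\|\partial^2_{x,h}\eta_h^{k+1}\|_{L^2(\Sigma)}^2,$$ $$D^k_{num}=\frac{\varrho_f\tau}{2}\int_{\hat\Omega}\eta_h^{k-1}|D_t\hat{\mathbf u}_h^k|^2d\hat x+\frac{\varrho_s\tau}{2}\|D_t\xi_h^k\|_{L^2(\Sigma)}^2+\frac{\gamma_1\tau}{2}\|\partial_{x_1}\xi_h^k\|_{L^2(\Sigma)}^2+\frac{\gamma_2\tau}{2}\|\partial^2_{x,h}\xi_h^k\|_{L^2(\Sigma)}^2\ \ (\ge0).$$ (Equivalently, with $\mathbf u_h^k=\hat{\mathbf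 u}_h^k\circ\mathcal A_{\eta_h^k}^{-1}$ on $\Omega_{\eta_h^k}$: $\int_{\hat\Omega}\eta_h^k|\hat{\mathbf u}_h^k|^2=\|\mathbf u_h^k\|^2_{L^2(\Omega_{\eta_h^k})}$ and $\int_{\hat\Omega}\eta_h^k|(\nabla\hat{\mathbf u}_h^k(\mathbb F_h^k)^{-1})^{\rm S}|^2=\|(\nabla\mathbf u_h^k)^{\rm S}\|^2_{L^2(\Omega_{\eta_h^k})}$.)
   Context: Setting: $\Sigma=(0,L_1)$, all functions $L_1$-periodic in the first variable; $\hat\Omega=\Sigma\times(0,1)$, $\Gamma_D=\Sigma\times\{0\}$; $\Omega_\eta=\{(x_1,x_2):x_1\in\Sigma,0<x_2<\eta(x_1)\}$, $\mathcal A_\eta(\hat x)=(\hat x_1,\eta\hat x_2)$; $\mathbb F(\eta)=\begin{pmatrix}1&0\\ \hat x_2\partial_{x_1}\eta&\eta\end{pmatrix}$, $\mathbb M(\eta)=\eta\mathbb F(\eta)^{-T}=\begin{pmatrix}\eta&-\hat x_2\partial_{x_1}\eta\\0&1\end{pmatrix}$; $(\nabla\mathbf u)_{ij}=\partial_ju_i$, $\mathbb A^{\rm S}=\frac12(\mathbb A+\mathbb A^T)$. Discrete spaces: $\mathcal T_h$ a shape-regular, quasi-uniform, periodic-compatible triangulation of $\hat\Omega$ of mesh size $h$, $\Sigma_h$ its trace partition on $\Sigma\times\{1\}$. $\hat V^f_h$: continuous, periodic $\mathbb R^2$-valued functions vanishing on $\Gamma_D$ whose components on each $K\in\mathcal T_h$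 lie in $\mathcal P^1(K)\oplus{\rm span}\{b_K\}$, $b_K$ the cubic bubble of $K$ (MINI element). $\hat Q^f_h$: continuous periodic piecewise affine functions on $\mathcal T_h$. $V^s_h$: continuous periodic piecewise affine functions on $\Sigma_h$. Discrete Laplacian $\partial^2_{x,h}:V^s_h\to V^s_h$: $\int_\Sigma\partial^2_{x,h}\eta\,\psi=-\int_\Sigma\partial_{x_1}\eta\,\partial_{x_1}\psi$ for all $\psi\in V^s_h$. $D_tv^k=(v^k-v^{k-1})/\tau$. $a_s(\eta,\zeta,\xi,\psi)=\int_\Sigma(\gamma_1\partial_{x_1}\eta\partial_{x_1}\psi+\gamma_2\partial_{x_1}\zeta\partial_{x_1}\psi+\gamma_3\partial_{x_1}\xi\partial_{x_1}\psi)$, constants $\varrho_f,\varrho_s,\mu,\gamma_1,\gamma_2>0,\gamma_3\ge0$. Scheme-R: given $\hat{\mathbf u}_h^0\in\hat V^f_h$, $\xi_h^0,\eta_h^0\in V^s_h$, set $\eta_h^1=\eta_h^0+\tau\xi_h^0$. For $k=1,\dots,N$ find $\hat p_h^k\in\hat Q^f_h$, $\hat{\mathbf u}_h^k\in\hat V^f_h$, $\xi_h^k,\eta_h^{k+1}\in V^s_h$ with $\hat{\mathbf u}_h^k(\hat x_1,1)=(0,\xi_h^k(\hat x_1))$, $\xi_h^k=D_t\eta_h^{k+1}$, such that for all $\hat q\in\hat Q^f_h$ and all $(\hat{\boldsymbol\varphi},\psi)\in\hat V^f_h\times V^s_h$ with $\hat{\boldsymbol\varphi}(\hat x_1,1)=(0,\psi(\hat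 x_1))$: (R1) $\int_{\hat\Omega}\hat q\,\nabla\hat{\mathbf u}_h^k:\mathbb M(\eta_h^k)=0$; (R2) $\varrho_f\int_{\hat\Omega}D_t\hat{\mathbf u}_h^k\cdot\hat{\boldsymbol\varphi}\,\eta_h^k+\frac12\varrho_f\int_{\hat\Omega}D_t\eta_h^k\,\hat{\mathbf u}_h^{k*}\cdot\hat{\boldsymbol\varphi}+\frac12\varrho_f\int_{\hat\Omega}\big(\hat{\boldsymbol\varphi}\cdot(\nabla\hat{\mathbf u}_h^k(\mathbb F_h^k)^{-1}\hat{\mathbf v}_h^{k-1})-\hat{\mathbf u}_h^k\cdot(\nabla\hat{\boldsymbol\varphi}(\mathbb F_h^k)^{-1}\hat{\mathbf v}_h^{k-1})\big)\eta_h^k+\int_{\hat\Omega}\hat{\boldsymbol\tau}_h^k:(\nabla\hat{\boldsymbol\varphi}(\mathbb F_h^k)^{-1})\eta_h^k+\varrho_s\int_\Sigma D_t\xi_h^k\psi+a_s(\eta_h^{k+1},\zeta_h^{k+1},\xi_h^k,\psi)=0$, where $\mathbb F_h^k=\mathbb F(\eta_h^k)$, $\hat{\mathbf u}_h^{k*}=2\hat{\mathbf u}_h^{k-1}-\hat{\mathbf u}_h^k$, $\hat{\mathbf w}_h^k=(0,\hat x_2D_t\eta_h^k)$, $\hat{\mathbf v}_h^{k-1}=\hat{\mathbf u}_h^{k-1}-\hat{\mathbf w}_h^k$, $\hat{\boldsymbol\tau}_h^k=2\mu(\nabla\hat{\mathbf u}_h^k(\mathbb F_h^k)^{-1})^{\rm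 S}-\hat p_h^k\mathbb I$, $\zeta_h^{k+1}=-\partial^2_{x,h}\eta_h^{k+1}$. *)

theory Defs
  imports "HOL-Analysis.Analysis"
begin

type_synonym pt = "real^2"

text \<open>Reference domain hat Omega = (0,L1) x (0,1), its closure, and the strip R x [0,1]
  on which L1-periodic (in x1) functions are represented.\<close>

definition Omega_hat :: "real \<Rightarrow> pt set" where
  "Omega_hat L1 = {x. 0 < x$1 \<and> x$1 < L1 \<and> 0 < x$2 \<and> x$2 < 1}"

definition Omega_hat_cl :: "real \<Rightarrow> pt set" where
  "Omega_hat_cl L1 = {x. 0 \<le> x$1 \<and> x$1 \<le> L1 \<and> 0 \<le> x$2 \<and> x$2 \<le> 1}"

definition strip :: "pt set" where
  "strip = {x. 0 \<le> x$2 \<and> x$2 \<le> 1}"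

definition periodic_triangulation :: "real \<Rightarrow> pt set set \<Rightarrow> bool" where
  "periodic_triangulation L1 T \<longleftrightarrow>
     finite T \<and> T \<noteq> {} \<and>
     (\<forall>K\<in>T. card K = 3 \<and> \<not> collinear K) \<and>
     \<Union> ((\<lambda>K. convex hull K) ` T) = Omega_hat_cl L1 \<and>
     (\<forall>K\<in>T. \<forall>K'\<in>T. K \<noteq> K' \<longrightarrow> convex hull K \<inter> convex hull K' = convex hull (K \<inter> K')) \<and>
     (\<forall>t. (vector [0, t] :: pt) \<in> \<Union>T \<longleftrightarrow> (vector [L1, t] :: pt) \<in> \<Union>T)"

definition bary :: "pt set \<Rightarrow> pt \<Rightarrow> pt \<Rightarrow> real" where
  "bary K x = (THE l. (\<forall>v. v \<notin> K \<longrightarrow> l v = 0) \<and> sum l K = 1 \<and> (\<Sum>v\<in>K. l v *\<^sub>R v) = x)"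

definition bubble :: "pt set \<Rightarrow> pt \<Rightarrow> real" where
  "bubble K x = (\<Prod>v\<in>K. bary K x v)"

definition P1_on :: "pt set \<Rightarrow> (pt \<Rightarrow> real) \<Rightarrow> bool" where
  "P1_on K f \<longleftrightarrow> (\<exists>a (b::pt). \<forall>x\<in>convex hull K. f x = a + inner b x)"

definition P1_bubble_on :: "pt set \<Rightarrow> (pt \<Rightarrow> real) \<Rightarrow> bool" where
  "P1_bubble_on K f \<longleftrightarrow> (\<exists>a (b::pt) c. \<forall>x\<in>convex hull K. f x = a + inner b x + c * bubble K x)"

definition Vf_h :: "real \<Rightarrow> pt set set \<Rightarrow> (pt \<Rightarrow> real^2) set" where
  "Vf_h L1 T = {u. continuous_on strip u \<and>
      (\<forall>x\<in>strip. u (x + vector [L1, 0]) = u x) \<and>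
      (\<forall>s\<in>{0<..<L1}. u (vector [s, 0]) = 0) \<and>
      (\<forall>K\<in>T. \<forall>i. P1_bubble_on K (\<lambda>x. u x $ i))}"

definition Qf_h :: "real \<Rightarrow> pt set set \<Rightarrow> (pt \<Rightarrow> real) set" where
  "Qf_h L1 T = {q. continuous_on strip q \<and>
      (\<forall>x\<in>strip. q (x + vector [L1, 0]) = q x) \<and>
      (\<forall>K\<in>T. P1_on K q)}"

definition top_cells :: "pt set set \<Rightarrow> real set set" where
  "top_cells T = {closed_segment (a$1) (b$1) | a b. \<exists>K\<in>T. a \<in> K \<and> b \<in> K \<and> a \<noteq> b \<and> a$2 = 1 \<and> b$2 = 1}"

definition Vs_h :: "real \<Rightarrow> pt set set \<Rightarrow> (real \<Rightarrow> real) set" where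
  "Vs_h L1 T = {e. continuous_on UNIV e \<and> (\<forall>s. e (s + L1) = e s) \<and>
      (\<forall>I\<in>top_cells T. \<exists>a b. \<forall>s\<in>I. e s = a + b * s)}"

text \<open>Pointwise (a.e.) derivatives of piecewise smooth functions; set to 0 where not
  differentiable (a null set for the discrete functions).  grad u x $ i $ j = d_j u_i.\<close>

definition dx :: "(real \<Rightarrow> real) \<Rightarrow> real \<Rightarrow> real" where
  "dx f s = (if f differentiable (at s) then deriv f s else 0)"

definition grad :: "(pt \<Rightarrow> real^2) \<Rightarrow> pt \<Rightarrow> real^2^2" where
  "grad u x = (if u differentiable (at x) then matrix (frechet_derivative u (at x)) else 0)"

definition mat2 :: "real \<Rightarrow> real \<Rightarrow> real \<Rightarrow> real \<Rightarrow> real^2^2" where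
  "mat2 a b c d = vector [vector [a, b], vector [c, d]]"

definition FF :: "(real \<Rightarrow> real) \<Rightarrow> pt \<Rightarrow> real^2^2" where
  "FF e x = mat2 1 0 (x$2 * dx e (x$1)) (e (x$1))"

definition MM :: "(real \<Rightarrow> real) \<Rightarrow> pt \<Rightarrow> real^2^2" where
  "MM e x = mat2 (e (x$1)) (- (x$2 * dx e (x$1))) 0 1"

definition symm :: "real^2^2 \<Rightarrow> real^2^2" where
  "symm A = (1/2) *\<^sub>R (A + transpose A)"

definition frob :: "real^2^2 \<Rightarrow> real^2^2 \<Rightarrow> real" where
  "frob A B = (\<Sum>i\<in>UNIV. \<Sum>j\<in>UNIV. A$i$j * B$i$j)"

definition intO :: "real \<Rightarrow> (pt \<Rightarrow> real) \<Rightarrow> real" where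
  "intO L1 f = (LINT x:Omega_hat L1|lebesgue. f x)"

definition intS :: "real \<Rightarrow> (real \<Rightarrow> real) \<Rightarrow> real" where
  "intS L1 g = (LINT s:{0<..<L1}|lebesgue. g s)"

definition is_disc_lap :: "real \<Rightarrow> pt set set \<Rightarrow> ((real \<Rightarrow> real) \<Rightarrow> real \<Rightarrow> real) \<Rightarrow> bool" where
  "is_disc_lap L1 T lap \<longleftrightarrow>
     (\<forall>e\<in>Vs_h L1 T. lap e \<in> Vs_h L1 T \<and>
        (\<forall>psi\<in>Vs_h L1 T. intS L1 (\<lambda>s. lap e s * psi s) = - intS L1 (\<lambda>s. dx e s * dx psi s)))"

definition R2_form ::
  "real \<Rightarrow> ((real \<Rightarrow> real) \<Rightarrow> real \<Rightarrow> real) \<Rightarrow> real \<Rightarrow> real \<Rightarrow> real \<Rightarrow> real \<Rightarrow> real \<Rightarrow> real \<Rightarrow> real \<Rightarrow>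
   (nat \<Rightarrow> pt \<Rightarrow> real) \<Rightarrow> (nat \<Rightarrow> pt \<Rightarrow> real^2) \<Rightarrow> (nat \<Rightarrow> real \<Rightarrow> real) \<Rightarrow> (nat \<Rightarrow> real \<Rightarrow> real) \<Rightarrow>
   nat \<Rightarrow> (pt \<Rightarrow> real^2) \<Rightarrow> (real \<Rightarrow> real) \<Rightarrow> real" where
  "R2_form L1 lap rho_f rho_s mu g1 g2 g3 tau p u xi eta k phi psi =
    (let Fi = (\<lambda>x. matrix_inv (FF (eta k) x));
         Dtu = (\<lambda>x. (1/tau) *\<^sub>R (u k x - u (k-1) x));
         Dteta = (\<lambda>s. (eta k s - eta (k-1) s) / tau);
         ustar = (\<lambda>x. 2 *\<^sub>R u (k-1) x - u k x);
         w = (\<lambda>x. vector [0, x$2 * Dteta (x$1)] :: real^2);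
         v = (\<lambda>x. u (k-1) x - w x);
         tauh = (\<lambda>x. (2 * mu) *\<^sub>R symm (grad (u k) x ** Fi x) - p k x *\<^sub>R mat 1);
         zeta = (\<lambda>s. - lap (eta (Suc k)) s)
     in rho_f * intO L1 (\<lambda>x. inner (Dtu x) (phi x) * eta k (x$1))
      + 1/2 * rho_f * intO L1 (\<lambda>x. Dteta (x$1) * inner (ustar x) (phi x))
      + 1/2 * rho_f * intO L1 (\<lambda>x. (inner (phi x) ((grad (u k) x ** Fi x) *v v x)
                                     - inner (u k x) ((grad phi x ** Fi x) *v v x)) * eta k (x$1))
      + intO L1 (\<lambda>x. frob (tauh x) (grad phi x ** Fi x) * eta k (x$1))
      + rho_s * intS L1 (\<lambda>s. (xi k s - xi (k-1) s) / tau * psi s)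
      + intS L1 (\<lambda>s. g1 * dx (eta (Suc k)) s * dx psi s + g2 * dx zeta s * dx psi s
                     + g3 * dx (xi k) s * dx psi s))"

definition schemeR ::
  "real \<Rightarrow> pt set set \<Rightarrow> ((real \<Rightarrow> real) \<Rightarrow> real \<Rightarrow> real) \<Rightarrow> real \<Rightarrow> real \<Rightarrow> real \<Rightarrow> real \<Rightarrow> real \<Rightarrow> real \<Rightarrow>
   real \<Rightarrow> nat \<Rightarrow>
   (nat \<Rightarrow> pt \<Rightarrow> real) \<Rightarrow> (nat \<Rightarrow> pt \<Rightarrow> real^2) \<Rightarrow> (nat \<Rightarrow> real \<Rightarrow> real) \<Rightarrow> (nat \<Rightarrow> real \<Rightarrow> real) \<Rightarrow> bool" where
  "schemeR L1 T lap rho_f rho_s mu g1 g2 g3 tau N p u xi eta \<longleftrightarrow>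
     u 0 \<in> Vf_h L1 T \<and> xi 0 \<in> Vs_h L1 T \<and> eta 0 \<in> Vs_h L1 T \<and>
     eta 1 = (\<lambda>s. eta 0 s + tau * xi 0 s) \<and>
     (\<forall>k\<in>{1..N}.
        p k \<in> Qf_h L1 T \<and> u k \<in> Vf_h L1 T \<and> xi k \<in> Vs_h L1 T \<and> eta (Suc k) \<in> Vs_h L1 T \<and>
        (\<forall>s\<in>{0<..<L1}. u k (vector [s, 1]) = vector [0, xi k s]) \<and>
        xi k = (\<lambda>s. (eta (Suc k) s - eta k s) / tau) \<and>
        (\<forall>q\<in>Qf_h L1 T. intO L1 (\<lambda>x. q x * frob (grad (u k) x) (MM (eta k) x)) = 0) \<and>
        (\<forall>phi\<in>Vf_h L1 T. \<forall>psi\<in>Vs_h L1 T.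
            (\<forall>s\<in>{0<..<L1}. phi (vector [s, 1]) = vector [0, psi s]) \<longrightarrow>
            R2_form L1 lap rho_f rho_s mu g1 g2 g3 tau p u xi eta k phi psi = 0))"

definition energy ::
  "real \<Rightarrow> ((real \<Rightarrow> real) \<Rightarrow> real \<Rightarrow> real) \<Rightarrow> real \<Rightarrow> real \<Rightarrow> real \<Rightarrow> real \<Rightarrow>
   (nat \<Rightarrow> pt \<Rightarrow> real^2) \<Rightarrow> (nat \<Rightarrow> real \<Rightarrow> real) \<Rightarrow> (nat \<Rightarrow> real \<Rightarrow> real) \<Rightarrow> nat \<Rightarrow> real" where
  "energy L1 lap rho_f rho_s g1 g2 u xi eta k =
      rho_f / 2 * intO L1 (\<lambda>x. eta k (x$1) * (norm (u k x))\<^sup>2)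
    + rho_s / 2 * intS L1 (\<lambda>s. (xi k s)\<^sup>2)
    + g1 / 2 * intS L1 (\<lambda>s. (dx (eta (Suc k)) s)\<^sup>2)
    + g2 / 2 * intS L1 (\<lambda>s. (lap (eta (Suc k)) s)\<^sup>2)"

definition Dnum ::
  "real \<Rightarrow> ((real \<Rightarrow> real) \<Rightarrow> real \<Rightarrow> real) \<Rightarrow> real \<Rightarrow> real \<Rightarrow> real \<Rightarrow> real \<Rightarrow> real \<Rightarrow>
   (nat \<Rightarrow> pt \<Rightarrow> real^2) \<Rightarrow> (nat \<Rightarrow> real \<Rightarrow> real) \<Rightarrow> (nat \<Rightarrow> real \<Rightarrow> real) \<Rightarrow> nat \<Rightarrow> real" where
  "Dnum L1 lap rho_f rho_s g1 g2 tau u xi eta k =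
      rho_f * tau / 2 * intO L1 (\<lambda>x. eta (k-1) (x$1) * (norm ((1/tau) *\<^sub>R (u k x - u (k-1) x)))\<^sup>2)
    + rho_s * tau / 2 * intS L1 (\<lambda>s. ((xi k s - xi (k-1) s) / tau)\<^sup>2)
    + g1 * tau / 2 * intS L1 (\<lambda>s. (dx (xi k) s)\<^sup>2)
    + g2 * tau / 2 * intS L1 (\<lambda>s. (lap (xi k) s)\<^sup>2)"

end

theory Submission
  imports Defs
begin

lemma Vs_lin: "e \<in> Vs_h L1 T \<Longrightarrow> f \<in> Vs_h L1 T \<Longrightarrow> (\<lambda>s. \<alpha> * e s + \<beta> * f s) \<in> Vs_h L1 T"
proof -
  assume e: "e \<in> Vs_h L1 T" and f: "f \<in> Vs_h L1 T"
  show ?thesis unfolding Vs_h_def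
  proof (intro CollectI conjI ballI allI)
    show "continuous_on UNIV (\<lambda>s. \<alpha> * e s + \<beta> * f s)"
      using e f unfolding Vs_h_def by (auto intro!: continuous_intros)
    show "\<alpha> * e (s + L1) + \<beta> * f (s + L1) = \<alpha> * e s + \<beta> * f s" for s
      using e f unfolding Vs_h_def by auto
    fix I assume I: "I \<in> top_cells T"
    obtain a1 b1 where 1: "\<forall>s\<in>I. e s = a1 + b1 * s" using e I unfolding Vs_h_def by blast
    obtain a2 b2 where 2: "\<forall>s\<in>I. f s = a2 + b2 * s" using f I unfolding Vs_h_def by blast
    show "\<exists>a b. \<forall>s\<in>I. \<alpha> * e s + \<beta> * f s = a + b * s"
      by (rule exI[of _ "\<alpha>*a1 + \<beta>*a2"], rule exI[of _ "\<alpha>*b1 + \<beta>*b2"]) (simp add: 1 2 algebra_simps)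
  qed
qed

lemma IS_cont: "continuous_on {0..L1} (f::real\<Rightarrow>real) \<Longrightarrow> set_integrable lebesgue {0<..<L1} f"
  by (rule set_integrable_subset[OF absolutely_integrable_continuous_real]) auto

lemma cl_cbox: "Omega_hat_cl L1 = cbox 0 (vector [L1, 1])"
  by (auto simp: Omega_hat_cl_def mem_box_cart forall_2)

lemma O_box: "Omega_hat L1 = box 0 (vector [L1, 1])"
  by (auto simp: Omega_hat_def mem_box_cart forall_2)

lemma Omega_sets[simp]: "Omega_hat L1 \<in> sets lebesgue"
  unfolding O_box by simp

lemma IO_cont: "continuous_on (Omega_hat_cl L1) (f::pt\<Rightarrow>real) \<Longrightarrow> set_integrable lebesgue (Omega_hat L1) f"
  unfolding cl_cbox O_box
  by (rule set_integrable_subset[OF absolutely_integrable_continuous]) (use box_subset_cbox in auto)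

lemma Vs_cont: "e \<in> Vs_h L1 T \<Longrightarrow> continuous_on S e"
  by (auto simp: Vs_h_def intro: continuous_on_subset)

lemma Vs_quot: "f \<in> Vs_h L1 T \<Longrightarrow> g \<in> Vs_h L1 T \<Longrightarrow> (\<lambda>s. (f s - g s) / tau) \<in> Vs_h L1 T"
  using Vs_lin[of f L1 T g "1/tau" "-1/tau"] by (simp add: diff_divide_distrib)

lemma lap_facts:
  assumes "is_disc_lap L1 T lap" "e \<in> Vs_h L1 T"
  shows "lap e \<in> Vs_h L1 T" "\<And>psi. psi \<in> Vs_h L1 T \<Longrightarrow> intS L1 (\<lambda>s. lap e s * psi s) = - intS L1 (\<lambda>s. dx e s * dx psi s)"
  using assms unfolding is_disc_lap_def by blast+

lemma IS_prod: "e \<in> Vs_h L1 T \<Longrightarrow> f \<in> Vs_h L1 T \<Longrightarrow> set_integrable lebesgue {0<..<L1} (\<lambda>s. e s * f s)"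
  by (rule IS_cont) (intro continuous_intros Vs_cont)

lemma B_comb:
  assumes lap: "is_disc_lap L1 T lap" and e: "e \<in> Vs_h L1 T" and f: "f \<in> Vs_h L1 T" and g: "g \<in> Vs_h L1 T"
  shows "intS L1 (\<lambda>s. dx e s * dx (\<lambda>s. (f s - g s) / tau) s)
       = (intS L1 (\<lambda>s. dx e s * dx f s) - intS L1 (\<lambda>s. dx e s * dx g s)) / tau"
proof -
  have h: "(\<lambda>s. (f s - g s) / tau) \<in> Vs_h L1 T" by (rule Vs_quot[OF f g])
  have le: "lap e \<in> Vs_h L1 T" using lap_facts[OF lap e] by blast
  have "intS L1 (\<lambda>s. dx e s * dx (\<lambda>s. (f s - g s) / tau) s) = - intS L1 (\<lambda>s. lap e s * ((f s - g s) / tau))"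
    using lap_facts(2)[OF lap e h] by simp
  also have "intS L1 (\<lambda>s. lap e s * ((f s - g s) / tau)) = intS L1 (\<lambda>s. (1/tau) * (lap e s * f s - lap e s * g s))"
    by (simp add: algebra_simps diff_divide_distrib)
  also have "\<dots> = (1/tau) * (intS L1 (\<lambda>s. lap e s * f s) - intS L1 (\<lambda>s. lap e s * g s))"
    unfolding intS_def
    by (simp only: set_integral_mult_right set_integral_diff(2)[OF IS_prod[OF le f] IS_prod[OF le g]])
  finally show ?thesis using lap_facts(2)[OF lap e f] lap_facts(2)[OF lap e g]
    by (simp add: field_simps) (simp only: minus_divide_left minus_diff_eq)
qed

lemma cont_zero:
  fixes w :: "real \<Rightarrow> real"
  assumes c: "continuous_on UNIV w" and z: "intS L1 (\<lambda>s. w s * w s) = 0"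
  shows "s \<in> {0<..<L1} \<Longrightarrow> w s = 0"
proof (rule ccontr)
  assume s: "s \<in> {0<..<L1}" and ne: "w s \<noteq> 0"
  have int: "integrable lebesgue (\<lambda>x. indicator {0<..<L1} x *\<^sub>R (w x * w x))"
    using IS_cont[of L1 "\<lambda>s. w s * w s"] continuous_on_subset[OF c] unfolding set_integrable_def
    by (auto intro!: continuous_intros)
  have "AE x in lebesgue. indicator {0<..<L1} x *\<^sub>R (w x * w x) = 0"
    using integral_nonneg_eq_0_iff_AE[OF int] z unfolding intS_def set_lebesgue_integral_def
    by (simp add: indicator_def)
  then obtain N where N: "{x \<in> space lebesgue. \<not> indicator {0<..<L1} x *\<^sub>R (w x * w x) = 0} \<subseteq> N"
    "emeasure lebesgue N = 0" "N \<in> sets lebesgue"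
    by (rule AE_E)
  define U where "U = {0<..<L1} \<inter> {x. w x \<noteq> 0}"
  have oU: "open U" unfolding U_def
  proof -
    have "open (UNIV \<inter> w -` (-{0}))" by (rule continuous_open_preimage[OF c open_UNIV open_Compl[OF closed_singleton]])
    then have "open {x. w x \<noteq> 0}" by (simp add: vimage_def)
    then show "open ({0<..<L1} \<inter> {x. w x \<noteq> 0})" by (intro open_Int) auto
  qed
  have "U \<subseteq> N" using N(1) by (auto simp: U_def indicator_def)
  then have "U \<in> null_sets lebesgue"
    by (rule null_sets_subset[rotated 2]) (use N oU in \<open>auto intro: borel_open\<close>)
  then have "negligible U" by (simp add: negligible_iff_null_sets)
  moreover have "U \<noteq> {}" using s ne by (auto simp: U_def)
  ultimately show False using open_not_negligible oU by blast
qed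

lemma alg3: fixes A F G Bh Bf Bg t :: real
  shows "A = -Bh \<Longrightarrow> F = -Bf \<Longrightarrow> G = -Bg \<Longrightarrow> Bh = (Bf - Bg)/t \<Longrightarrow> A - (1/t)*(F-G) = 0"
  by (simp add: diff_divide_distrib)

lemma lap_lin:
  assumes lap: "is_disc_lap L1 T lap" and f: "f \<in> Vs_h L1 T" and g: "g \<in> Vs_h L1 T" and "L1 > 0"
  shows "s \<in> {0<..<L1} \<Longrightarrow> lap (\<lambda>s. (f s - g s) / tau) s = (lap f s - lap g s) / tau"
proof -
  assume s: "s \<in> {0<..<L1}"
  define h where "h = (\<lambda>s. (f s - g s) / tau)"
  have hV: "h \<in> Vs_h L1 T" unfolding h_def by (rule Vs_quot[OF f g])
  have lh: "lap h \<in> Vs_h L1 T" and lf: "lap f \<in> Vs_h L1 T" and lg: "lap g \<in> Vs_h L1 T"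
    using lap_facts(1)[OF lap] hV f g by blast+
  define w where "w = (\<lambda>s. lap h s - (lap f s - lap g s) / tau)"
  have eqw: "w = (\<lambda>s. 1 * lap h s + (-1) * ((lap f s - lap g s)/tau))" unfolding w_def by (rule ext) (simp only: mult_1 mult_minus1 diff_conv_add_uminus)
  have wV: "w \<in> Vs_h L1 T"
    by (subst eqw) (rule Vs_lin[OF lh Vs_quot[OF lf lg]])
  have "intS L1 (\<lambda>s. w s * psi s) = 0" if psi: "psi \<in> Vs_h L1 T" for psi
  proof -
    have "intS L1 (\<lambda>s. w s * psi s) = intS L1 (\<lambda>s. lap h s * psi s) - (1/tau) * (intS L1 (\<lambda>s. lap f s * psi s) - intS L1 (\<lambda>s. lap g s * psi s))"
    proof -
      have "(\<lambda>s. w s * psi s) = (\<lambda>s. lap h s * psi s - (1/tau) * (lap f s * psi s - lap g s * psi s))"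
        unfolding w_def by (auto simp: algebra_simps diff_divide_distrib)
      then show ?thesis unfolding intS_def
        by (simp only: set_integral_mult_right set_integral_diff(2)[OF IS_prod[OF lf psi] IS_prod[OF lg psi]]
          set_integral_diff(2)[OF IS_prod[OF lh psi] set_integrable_mult_right[OF set_integral_diff(1)[OF IS_prod[OF lf psi] IS_prod[OF lg psi]]]])
    qed
    also have "\<dots> = 0"
    proof -
      have c: "\<And>a b. intS L1 (\<lambda>s. dx a s * dx b s) = intS L1 (\<lambda>s. dx b s * dx a s)" by (simp add: mult.commute)
      have bh: "intS L1 (\<lambda>s. dx h s * dx psi s) = (intS L1 (\<lambda>s. dx f s * dx psi s) - intS L1 (\<lambda>s. dx g s * dx psi s)) / tau"
        using B_comb[OF lap psi f g, of tau] unfolding h_def[symmetric] c[of h psi] c[of f psi] c[of g psi] .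
      show ?thesis
        by (rule alg3[OF lap_facts(2)[OF lap hV psi] lap_facts(2)[OF lap f psi] lap_facts(2)[OF lap g psi] bh])
    qed
    finally show ?thesis .
  qed
  from this[OF wV] have "w s = 0" using cont_zero[of w L1] Vs_cont[OF wV] s by blast
  then show ?thesis unfolding w_def h_def by simp
qed

lemma mat2_nth[simp]: "mat2 a b c d $1$1 = a" "mat2 a b c d $1$2 = b" "mat2 a b c d $2$1 = c" "mat2 a b c d $2$2 = d"
  by (simp_all add: mat2_def)

lemma mat2_eq: "(A::real^2^2) = mat2 (A$1$1) (A$1$2) (A$2$1) (A$2$2)"
  by (simp add: vec_eq_iff forall_2)

lemma mat2_mult: "mat2 a b c d ** mat2 a' b' c' d' = mat2 (a*a' + b*c') (a*b' + b*d') (c*a' + d*c') (c*b' + d*d')"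
  by (simp add: vec_eq_iff forall_2 matrix_matrix_mult_def sum_2)

lemma mat2_one: "(mat 1 :: real^2^2) = mat2 1 0 0 1"
  by (simp add: vec_eq_iff forall_2 mat_def)

lemma mat2_ops: "(r::real) *\<^sub>R mat2 a b c d = mat2 (r*a) (r*b) (r*c) (r*d)"
  "mat2 a b c d - mat2 a' b' c' d' = mat2 (a-a') (b-b') (c-c') (d-d')"
  "symm (mat2 a b c d) = mat2 a ((b+c)/2) ((c+b)/2) d"
  "frob (mat2 a b c d) (mat2 a' b' c' d') = a*a' + b*b' + c*c' + d*d'"
  by (simp_all add: vec_eq_iff forall_2 symm_def frob_def sum_2 transpose_def field_simps)

lemma inv_FF:
  assumes "(e::real) \<noteq> 0"
  shows "matrix_inv (mat2 1 0 c e) = mat2 1 0 (-c/e) (1/e)"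
proof -
  let ?F = "mat2 1 0 c e" and ?E = "mat2 1 0 (-c/e) (1/e)"
  have 1: "?F ** ?E = mat 1" "?E ** ?F = mat 1" using assms by (simp_all add: mat2_mult mat2_one field_simps)
  then have "\<exists>A'. ?F ** A' = mat 1 \<and> A' ** ?F = mat 1" by blast
  then have 2: "?F ** matrix_inv ?F = mat 1 \<and> matrix_inv ?F ** ?F = mat 1"
    unfolding matrix_inv_def by (rule someI_ex)
  have "matrix_inv ?F = (?E ** ?F) ** matrix_inv ?F" by (simp only: 1 matrix_mul_lid)
  also have "\<dots> = ?E ** (?F ** matrix_inv ?F)" by (simp add: matrix_mul_assoc)
  also have "\<dots> = ?E" using 2 by simp
  finally show ?thesis .
qed

lemma T4_pt: "e (x$1) > 0 \<Longrightarrow>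
  frob ((2*mu) *\<^sub>R symm (grad u x ** matrix_inv (FF e x)) - q *\<^sub>R mat 1) (grad u x ** matrix_inv (FF e x)) * e (x$1)
  = 2 * mu * (e (x$1) * frob (symm (grad u x ** matrix_inv (FF e x))) (symm (grad u x ** matrix_inv (FF e x))))
    - q * frob (grad u x) (MM e x)"
proof -
  assume pos: "e (x$1) > 0"
  obtain a b c d where D: "grad u x = mat2 a b c d" using mat2_eq by blast
  have Fi: "matrix_inv (FF e x) = mat2 1 0 (-(x$2 * dx e (x$1))/e (x$1)) (1/e (x$1))"
    unfolding FF_def by (rule inv_FF) (use pos in simp)
  show ?thesis unfolding Fi D MM_def mat2_mult mat2_one mat2_ops using pos
    by (simp add: field_simps)
qed

lemma GEN:
  fixes f :: "'a::euclidean_space \<Rightarrow> real"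
  assumes S: "S \<in> lmeasurable" and N: "negligible N" and c: "continuous_on (S - N) f"
    and B: "\<And>x. x \<in> S \<Longrightarrow> \<bar>f x\<bar> \<le> B"
  shows "set_integrable lebesgue S f"
proof -
  have Sl: "S \<in> sets lebesgue" using S by (simp add: fmeasurableD)
  have NS: "N \<inter> S \<in> null_sets (lebesgue_on S)"
  proof -
    have "negligible (N \<inter> S)" using negligible_subset[OF N, of "N \<inter> S"] by blast
    then have "N \<inter> S \<in> null_sets lebesgue" by (simp add: negligible_iff_null_sets)
    then show ?thesis by (subst null_sets_restrict_space[OF Sl]) blast
  qed
  have "S - N \<inter> S = S - N" by blast
  moreover have "S - N \<in> sets lebesgue" using Sl N by (simp add: negligible_imp_sets sets.Diff)
  ultimately have "f \<in> borel_measurable (lebesgue_on (S - N \<inter> S))"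
    using continuous_imp_measurable_on_sets_lebesgue[OF c] by simp
  then have m: "f \<in> borel_measurable (lebesgue_on S)"
    by (rule borel_measurable_diff_null[OF NS Sl, THEN iffD1])
  show ?thesis
    by (rule measurable_bounded_by_integrable_imp_absolutely_integrable[OF m Sl integrable_on_const[OF S, of B]])
      (use B in simp)
qed

lemma tri_finT: "periodic_triangulation L1 T \<Longrightarrow> finite T"
  unfolding periodic_triangulation_def by (elim conjE)

lemma tri_card: "periodic_triangulation L1 T \<Longrightarrow> K \<in> T \<Longrightarrow> card K = 3 \<and> \<not> collinear K"
  unfolding periodic_triangulation_def by (elim conjE) blast

lemma tri_finK: "periodic_triangulation L1 T \<Longrightarrow> K \<in> T \<Longrightarrow> finite K"
  using tri_card by (metis card.infinite zero_neq_numeral)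

lemma tri_cover: "periodic_triangulation L1 T \<Longrightarrow> \<Union> ((\<lambda>K. convex hull K) ` T) = Omega_hat_cl L1"
  unfolding periodic_triangulation_def by (elim conjE)

lemma cover1:
  assumes tri: "periodic_triangulation L1 T" and s: "0 \<le> s" "s \<le> L1"
  shows "s \<in> (\<lambda>v. v$1) ` \<Union>T \<or> (\<exists>I\<in>top_cells T. s \<in> interior I)"
proof -
  let ?x = "vector [s, 1] :: pt"
  have "?x \<in> Omega_hat_cl L1" using s unfolding Omega_hat_cl_def by simp
  then have "?x \<in> \<Union> ((\<lambda>K. convex hull K) ` T)" by (simp only: tri_cover[OF tri])
  then obtain K where K: "K \<in> T" "?x \<in> convex hull K" by (rule UN_E)
  have fK: "finite K" using tri_finK[OF tri K(1)] .
  obtain w where w: "\<forall>v\<in>K. 0 \<le> w v" "sum w K = 1" "(\<Sum>v\<in>K. w v *\<^sub>R v) = ?x"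
    using K(2) unfolding convex_hull_finite[OF fK] by blast
  have le1: "v$2 \<le> 1" if "v \<in> K" for v
  proof -
    have "v \<in> convex hull K" using hull_subset[of K convex] that by blast
    then have "v \<in> \<Union> ((\<lambda>K. convex hull K) ` T)" using K(1) by blast
    then have "v \<in> Omega_hat_cl L1" by (simp only: tri_cover[OF tri])
    then show ?thesis by (simp add: Omega_hat_cl_def)
  qed
  have c2: "(\<Sum>v\<in>K. w v * v$2) = 1" and c1: "(\<Sum>v\<in>K. w v * v$1) = s"
    using arg_cong[OF w(3), of "\<lambda>y. y$2"] arg_cong[OF w(3), of "\<lambda>y. y$1"] by simp_all
  have "(\<Sum>v\<in>K. w v * (1 - v$2)) = 0" using c2 w(2) by (simp add: algebra_simps sum_subtractf)
  then have z: "\<forall>v\<in>K. w v * (1 - v$2) = 0"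
    using sum_nonneg_eq_0_iff[OF fK, of "\<lambda>v. w v * (1 - v$2)"] w(1) le1 by auto
  define K1 where "K1 = {v\<in>K. w v > 0}"
  have fK1: "finite K1" using fK by (simp add: K1_def)
  have top: "v$2 = 1" if "v \<in> K1" for v using z that by (auto simp: K1_def)
  have K1ne: "K1 \<noteq> {}"
  proof
    assume "K1 = {}"
    then have "\<forall>v\<in>K. w v = 0" using w(1) by (force simp: K1_def)
    then show False using w(2) by simp
  qed
  define lo where "lo = Min ((\<lambda>v. v$1) ` K1)"
  define hi where "hi = Max ((\<lambda>v. v$1) ` K1)"
  have "lo \<in> (\<lambda>v. v$1) ` K1" unfolding lo_def using fK1 K1ne by (intro Min_in) auto
  then obtain a where a: "a \<in> K1" "a$1 = lo" by (metis imageE)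
  have "hi \<in> (\<lambda>v. v$1) ` K1" unfolding hi_def using fK1 K1ne by (intro Max_in) auto
  then obtain b where b: "b \<in> K1" "b$1 = hi" by (metis imageE)
  have "(\<Sum>v\<in>K. w v * lo) \<le> (\<Sum>v\<in>K. w v * v$1)"
  proof (rule sum_mono)
    fix v assume v: "v \<in> K"
    show "w v * lo \<le> w v * v$1"
    proof (cases "w v > 0")
      case True then have "v \<in> K1" using v by (simp add: K1_def)
      then have "lo \<le> v$1" unfolding lo_def using fK1 by simp
      then show ?thesis using True by simp
    next
      case False then have "w v = 0" using w(1) v by force
      then show ?thesis by simp
    qed
  qed
  then have los: "lo \<le> s" using c1 w(2) by (simp add: sum_distrib_right[symmetric])
  have "(\<Sum>v\<in>K. w v * v$1) \<le> (\<Sum>v\<in>K. w v * hi)"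
  proof (rule sum_mono)
    fix v assume v: "v \<in> K"
    show "w v * v$1 \<le> w v * hi"
    proof (cases "w v > 0")
      case True then have "v \<in> K1" using v by (simp add: K1_def)
      then have "v$1 \<le> hi" unfolding hi_def using fK1 by simp
      then show ?thesis using True by simp
    next
      case False then have "w v = 0" using w(1) v by force
      then show ?thesis by simp
    qed
  qed
  then have shi: "s \<le> hi" using c1 w(2) by (simp add: sum_distrib_right[symmetric])
  have aK: "a \<in> K" and bK: "b \<in> K" using a b by (auto simp: K1_def)
  show ?thesis
  proof (cases "s = lo \<or> s = hi")
    case True
    then have "s = a$1 \<or> s = b$1" using a b by auto
    then show ?thesis using aK bK K(1) by blast
  next
    case False
    then have lt: "lo < s" "s < hi" using los shi by auto
    then have ab: "a \<noteq> b" using a b by auto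
    have "closed_segment (a$1) (b$1) \<in> top_cells T"
      unfolding top_cells_def using K(1) aK bK ab top a(1) b(1) by blast
    moreover have "s \<in> interior (closed_segment (a$1) (b$1))"
      using lt a b by (simp add: closed_segment_eq_real_ivl)
    ultimately show ?thesis by blast
  qed
qed

lemma finite_verts: "periodic_triangulation L1 T \<Longrightarrow> finite (\<Union>T)"
  using tri_finT tri_finK by blast

lemma finite_cells: "periodic_triangulation L1 T \<Longrightarrow> finite (top_cells T)"
proof -
  assume tri: "periodic_triangulation L1 T"
  have "top_cells T \<subseteq> (\<lambda>(a,b). closed_segment (a$1) (b$1)) ` (\<Union>T \<times> \<Union>T)"
    unfolding top_cells_def by fastforce
  then show ?thesis using finite_verts[OF tri] finite_subset by blast
qed

lemma dx_props:
  assumes tri: "periodic_triangulation L1 T" and e: "e \<in> Vs_h L1 T"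
  shows "continuous_on ({0<..<L1} - (\<lambda>v. v$1) ` \<Union>T) (dx e)"
    and "\<exists>B. \<forall>s\<in>{0<..<L1}. \<bar>dx e s\<bar> \<le> B"
proof -
  define F where "F = (\<lambda>v::pt. v$1) ` \<Union>T"
  have fF: "finite F" unfolding F_def using finite_verts[OF tri] by simp
  have fC: "finite (top_cells T)" using finite_cells[OF tri] .
  have "\<forall>I\<in>top_cells T. \<exists>a b. \<forall>s\<in>I. e s = a + b * s" using e unfolding Vs_h_def by blast
  then obtain A Bt where AB: "\<forall>I\<in>top_cells T. \<forall>s\<in>I. e s = A I + Bt I * s"
    by metis
  have dxI: "dx e t = Bt I" if I: "I \<in> top_cells T" and t: "t \<in> interior I" for I t
  proof -
    have d0: "((\<lambda>t. A I + Bt I * t) has_real_derivative Bt I) (at t)"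
      by (auto intro!: derivative_eq_intros)
    have "(e has_real_derivative Bt I) (at t)"
      by (rule has_field_derivative_transform_within_open[OF d0 open_interior t])
        (use AB I interior_subset in force)
    then show ?thesis unfolding dx_def
      using DERIV_imp_deriv real_differentiable_def by auto
  qed
  have cov: "\<exists>I\<in>top_cells T. s \<in> interior I" if "s \<in> {0<..<L1} - F" for s
    using cover1[OF tri, of s] that unfolding F_def by auto
  show "continuous_on ({0<..<L1} - (\<lambda>v. v$1) ` \<Union>T) (dx e)"
    unfolding F_def[symmetric]
  proof -
    have op: "open ({0<..<L1} - F)" using fF by (simp add: open_Diff finite_imp_closed)
    show "continuous_on ({0<..<L1} - F) (dx e)"
      unfolding continuous_on_eq_continuous_at[OF op]
    proof
      fix s assume s: "s \<in> {0<..<L1} - F"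
      obtain I where I: "I \<in> top_cells T" "s \<in> interior I" using cov[OF s] by blast
      have "eventually (\<lambda>t. dx e t = dx e s) (at s)"
        unfolding eventually_at_topological
        using I dxI by (intro exI[of _ "interior I"]) auto
      then show "isCont (dx e) s" unfolding continuous_at by (rule tendsto_eventually)
    qed
  qed
  show "\<exists>B. \<forall>s\<in>{0<..<L1}. \<bar>dx e s\<bar> \<le> B"
  proof (intro exI ballI)
    fix s assume s: "s \<in> {0<..<L1}"
    have n1: "0 \<le> (\<Sum>I\<in>top_cells T. \<bar>Bt I\<bar>)" and n2: "0 \<le> (\<Sum>v\<in>F. \<bar>dx e v\<bar>)" by (auto intro: sum_nonneg)
    show "\<bar>dx e s\<bar> \<le> (\<Sum>I\<in>top_cells T. \<bar>Bt I\<bar>) + (\<Sum>v\<in>F. \<bar>dx e v\<bar>)"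
    proof (cases "s \<in> F")
      case True
      then have "\<bar>dx e s\<bar> \<le> (\<Sum>v\<in>F. \<bar>dx e v\<bar>)" using fF by (intro member_le_sum) auto
      then show ?thesis using n1 by linarith
    next
      case False
      then obtain I where I: "I \<in> top_cells T" "s \<in> interior I" using cov s by blast
      then have "\<bar>dx e s\<bar> = \<bar>Bt I\<bar>" using dxI by simp
      also have "\<dots> \<le> (\<Sum>I\<in>top_cells T. \<bar>Bt I\<bar>)" using fC I by (intro member_le_sum) auto
      finally show ?thesis using n2 by linarith
    qed
  qed
qed

lemma IS_dx: "periodic_triangulation L1 T \<Longrightarrow> L1 > 0 \<Longrightarrow> e \<in> Vs_h L1 T \<Longrightarrow> f \<in> Vs_h L1 T \<Longrightarrow>
   set_integrable lebesgue {0<..<L1} (\<lambda>s. dx e s * dx f s)"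
proof -
  assume tri: "periodic_triangulation L1 T" and e: "e \<in> Vs_h L1 T" and f: "f \<in> Vs_h L1 T"
  obtain Be where Be: "\<forall>s\<in>{0<..<L1}. \<bar>dx e s\<bar> \<le> Be" using dx_props(2)[OF tri e] by blast
  obtain Bf where Bf: "\<forall>s\<in>{0<..<L1}. \<bar>dx f s\<bar> \<le> Bf" using dx_props(2)[OF tri f] by blast
  show ?thesis
  proof (rule GEN[where N="(\<lambda>v. v$1) ` \<Union>T" and B="Be * Bf"])
    show "{0<..<L1} \<in> lmeasurable" by (simp add: lmeasurable_open)
    show "negligible ((\<lambda>v::pt. v$1) ` \<Union>T)" using finite_verts[OF tri] by (intro negligible_finite) simp
    show "continuous_on ({0<..<L1} - (\<lambda>v. v$1) ` \<Union>T) (\<lambda>s. dx e s * dx f s)"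
      by (intro continuous_intros dx_props(1)[OF tri e] dx_props(1)[OF tri f])
    fix s assume s: "s \<in> {0<..<L1}"
    have "\<bar>dx e s * dx f s\<bar> = \<bar>dx e s\<bar> * \<bar>dx f s\<bar>" by (simp add: abs_mult)
    also have "\<dots> \<le> Be * Bf" using Be Bf s by (intro mult_mono) auto
    finally show "\<bar>dx e s * dx f s\<bar> \<le> Be * Bf" .
  qed
qed

lemma inner2: "inner (x::pt) y = x$1*y$1 + x$2*y$2"
  by (simp add: inner_vec_def sum_2)

lemma par_lemma:
  fixes p r :: pt
  assumes D: "p$1*r$2 - p$2*r$1 = 0"
  shows "p = 0 \<or> r = 0 \<or> (\<exists>c. r = c *\<^sub>R p)"
proof -
  obtain a b c d where abcd: "p$1 = a" "p$2 = b" "r$1 = c" "r$2 = d" by blast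
  have D': "a*d = b*c" using D abcd by simp
  show ?thesis
  proof (cases "a = 0")
    case False
    have "d = (c/a) * b" using D' False by (simp add: field_simps)
    moreover have "c = (c/a) * a" using False by simp
    ultimately have "r = (c/a) *\<^sub>R p" using abcd by (simp add: vec_eq_iff forall_2)
    then show ?thesis by blast
  next
    case True
    show ?thesis
    proof (cases "b = 0")
      case True
      then have "p = 0" using \<open>a = 0\<close> abcd by (simp add: vec_eq_iff forall_2)
      then show ?thesis by blast
    next
      case False
      then have "c = 0" using D' True by simp
      then have "r = (d/b) *\<^sub>R p" using False True abcd by (simp add: vec_eq_iff forall_2)
      then show ?thesis by blast
    qed
  qed
qed

lemma det_nz:
  fixes v1 v2 v3 :: pt
  assumes nc: "\<not> collinear {v1,v2,v3}"
  shows "(v2-v1)$1*(v3-v1)$2 - (v2-v1)$2*(v3-v1)$1 \<noteq> 0"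
proof
  assume D: "(v2-v1)$1*(v3-v1)$2 - (v2-v1)$2*(v3-v1)$1 = 0"
  have "collinear {0, v2 - v1, v3 - v1}" using par_lemma[OF D] by (simp add: collinear_lemma)
  then have "collinear {v2, v1, v3}" by (subst collinear_3) auto
  then show False using nc by (simp add: insert_commute)
qed

lemma cramer:
  fixes D p1 p2 r1 r2 y1 y2 :: real
  assumes "D = p1*r2 - p2*r1" "D \<noteq> 0"
  shows "((y1*r2 - y2*r1)/D) * p1 + ((p1*y2 - p2*y1)/D) * r1 = y1"
    "((y1*r2 - y2*r1)/D) * p2 + ((p1*y2 - p2*y1)/D) * r2 = y2"
proof -
  have "(y1*r2 - y2*r1) * p1 + (p1*y2 - p2*y1) * r1 = y1 * D" "(y1*r2 - y2*r1) * p2 + (p1*y2 - p2*y1) * r2 = y2 * D"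
    unfolding assms(1) by (simp_all add: algebra_simps)
  then show "((y1*r2 - y2*r1)/D) * p1 + ((p1*y2 - p2*y1)/D) * r1 = y1"
    "((y1*r2 - y2*r1)/D) * p2 + ((p1*y2 - p2*y1)/D) * r2 = y2"
    using assms(2) by (simp_all add: field_simps)
qed

lemma bubble_poly:
  assumes c3: "card K = 3" and nc: "\<not> collinear K"
  shows "\<exists>\<alpha>1 \<alpha>2 \<alpha>3 (\<beta>1::pt) \<beta>2 \<beta>3. \<forall>x. bubble K x = (\<alpha>1 + inner \<beta>1 x) * (\<alpha>2 + inner \<beta>2 x) * (\<alpha>3 + inner \<beta>3 x)"
proof -
  obtain v1 v2 v3 where K: "K = {v1,v2,v3}" and d: "v1 \<noteq> v2" "v2 \<noteq> v3" "v1 \<noteq> v3"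
    using c3 card_3_iff by metis
  define p where "p = v2 - v1"
  define r where "r = v3 - v1"
  define D where "D = p$1*r$2 - p$2*r$1"
  have D0: "D \<noteq> 0" unfolding D_def p_def r_def using det_nz nc K by blast
  define l2 where "l2 = (\<lambda>x::pt. ((x-v1)$1*r$2 - (x-v1)$2*r$1)/D)"
  define l3 where "l3 = (\<lambda>x::pt. (p$1*(x-v1)$2 - p$2*(x-v1)$1)/D)"
  define l1 where "l1 = (\<lambda>x. 1 - l2 x - l3 x)"
  define L where "L = (\<lambda>x v. if v = v1 then l1 x else if v = v2 then l2 x else if v = v3 then l3 x else 0)"
  have sumK: "sum f K = f v1 + f v2 + f v3" for f :: "pt \<Rightarrow> 'b::comm_monoid_add"
    using d unfolding K by (simp add: add.assoc)
  have vsum: "(\<Sum>v\<in>K. l v *\<^sub>R v) = v1 + l v2 *\<^sub>R p + l v3 *\<^sub>R r" if "sum l K = 1" for l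
  proof -
    have "l v1 *\<^sub>R v1 + l v2 *\<^sub>R v2 + l v3 *\<^sub>R v3 = (l v1 + l v2 + l v3) *\<^sub>R v1 + l v2 *\<^sub>R p + l v3 *\<^sub>R r"
      unfolding p_def r_def by (simp add: algebra_simps)
    moreover have "l v1 + l v2 + l v3 = 1" using that sumK[of l] by simp
    ultimately show ?thesis unfolding sumK by simp
  qed
  have bary: "bary K x = L x" for x
    unfolding bary_def
  proof (rule the_equality)
    have sL: "sum (L x) K = 1" unfolding sumK L_def l1_def using d by simp
    show "(\<forall>v. v \<notin> K \<longrightarrow> L x v = 0) \<and> sum (L x) K = 1 \<and> (\<Sum>v\<in>K. L x v *\<^sub>R v) = x"
    proof (intro conjI allI impI sL)
      show "L x v = 0" if "v \<notin> K" for v using that unfolding K L_def by auto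
      have Lv: "L x v2 = l2 x" "L x v3 = l3 x" unfolding L_def using d by auto
      have c: "l2 x * p$1 + l3 x * r$1 = (x-v1)$1" "l2 x * p$2 + l3 x * r$2 = (x-v1)$2"
        unfolding l2_def l3_def by (rule cramer[OF D_def D0])+
      show "(\<Sum>v\<in>K. L x v *\<^sub>R v) = x" unfolding vsum[OF sL] Lv
        using c by (auto simp: vec_eq_iff forall_2 algebra_simps)
    qed
  next
    fix l assume l: "(\<forall>v. v \<notin> K \<longrightarrow> l v = 0) \<and> sum l K = 1 \<and> (\<Sum>v\<in>K. l v *\<^sub>R v) = x"
    then have e: "v1 + l v2 *\<^sub>R p + l v3 *\<^sub>R r = x" using vsum by metis
    then have e1: "l v2 * p$1 + l v3 * r$1 = (x - v1)$1" and e2: "l v2 * p$2 + l v3 * r$2 = (x - v1)$2"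
      by (auto simp: vec_eq_iff forall_2)
    have m2: "l v2 = l2 x"
    proof -
      have "l v2 * D = (x-v1)$1*r$2 - (x-v1)$2*r$1"
        unfolding D_def e1[symmetric] e2[symmetric] by (simp add: algebra_simps)
      then show ?thesis unfolding l2_def using D0 by (simp add: field_simps)
    qed
    have m3: "l v3 = l3 x"
    proof -
      have "l v3 * D = p$1*(x-v1)$2 - p$2*(x-v1)$1"
        unfolding D_def e1[symmetric] e2[symmetric] by (simp add: algebra_simps)
      then show ?thesis unfolding l3_def using D0 by (simp add: field_simps)
    qed
    have m1: "l v1 = l1 x" using l sumK[of l] m2 m3 unfolding l1_def by simp
    show "l = L x"
    proof
      fix v show "l v = L x v"
        using m1 m2 m3 l d unfolding L_def K by auto
    qed
  qed
  have bub: "bubble K x = l1 x * l2 x * l3 x" for x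
    unfolding bubble_def bary using d unfolding K L_def by (simp add: mult.assoc)
  define n2 where "n2 = (vector [r$2, -r$1] :: pt)"
  define n3 where "n3 = (vector [-p$2, p$1] :: pt)"
  have l2e: "l2 x = - inner v1 n2 / D + inner ((1/D) *\<^sub>R n2) x" for x
    unfolding l2_def n2_def inner2 using D0 by (simp add: field_simps)
  have l3e: "l3 x = - inner v1 n3 / D + inner ((1/D) *\<^sub>R n3) x" for x
    unfolding l3_def n3_def inner2 using D0 by (simp add: field_simps)
  have l1e: "l1 x = (1 + inner v1 n2 / D + inner v1 n3 / D) + inner (- (1/D) *\<^sub>R n2 - (1/D) *\<^sub>R n3) x" for x
    unfolding l1_def l2e l3e by (simp add: inner_diff_left algebra_simps)
  show ?thesis unfolding bub l1e l2e l3e by blast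
qed

lemma poly_deriv:
  "((\<lambda>y::pt. a + inner b y + c * ((\<alpha>1 + inner \<beta>1 y) * (\<alpha>2 + inner \<beta>2 y) * (\<alpha>3 + inner \<beta>3 y))) has_derivative
    (\<lambda>h. inner b h + c * (inner \<beta>1 h * (\<alpha>2 + inner \<beta>2 y) * (\<alpha>3 + inner \<beta>3 y)
       + (\<alpha>1 + inner \<beta>1 y) * inner \<beta>2 h * (\<alpha>3 + inner \<beta>3 y) + (\<alpha>1 + inner \<beta>1 y) * (\<alpha>2 + inner \<beta>2 y) * inner \<beta>3 h))) (at y)"
  by (auto intro!: derivative_eq_intros simp: algebra_simps)

lemma axis_comp: "(axis j (1::real) :: pt) $ i = (if i = j then 1 else 0)"
  by (simp add: axis_def)

lemma grad_local:
  assumes tri: "periodic_triangulation L1 T" and u: "u \<in> Vf_h L1 T" and K: "K \<in> T"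
  shows "\<exists>Pd::2 \<Rightarrow> 2 \<Rightarrow> pt \<Rightarrow> real. (\<forall>i j. continuous_on UNIV (Pd i j)) \<and>
           (\<forall>x\<in>interior (convex hull K). \<forall>i j. grad u x $i$j = Pd i j x)"
proof -
  have "card K = 3 \<and> \<not> collinear K" using tri_card[OF tri K] .
  then obtain \<alpha>1 \<alpha>2 \<alpha>3 \<beta>1 \<beta>2 \<beta>3 where bub:
    "\<forall>x. bubble K x = (\<alpha>1 + inner \<beta>1 x) * (\<alpha>2 + inner \<beta>2 x) * (\<alpha>3 + inner \<beta>3 x)"
    using bubble_poly by blast
  have "\<forall>i. P1_bubble_on K (\<lambda>x. u x $ i)" using u K unfolding Vf_h_def by blast
  then have "\<forall>i. \<exists>a b c. \<forall>x\<in>convex hull K. u x $ i = a + inner b x + c * bubble K x"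
    unfolding P1_bubble_on_def by blast
  then have "\<forall>i. \<exists>abc. \<forall>x\<in>convex hull K. u x $ i = fst abc + inner (fst (snd abc)) x + snd (snd abc) * bubble K x"
    by (metis fst_conv snd_conv)
  then obtain Fc where Fc: "\<forall>i. \<forall>x\<in>convex hull K. u x $ i = fst (Fc i) + inner (fst (snd (Fc i))) x + snd (snd (Fc i)) * bubble K x"
    by (metis choice)
  define A where "A = (\<lambda>i. fst (Fc i))"
  define B where "B = (\<lambda>i. fst (snd (Fc i)))"
  define C where "C = (\<lambda>i. snd (snd (Fc i)))"
  have ABC: "\<forall>i. \<forall>x\<in>convex hull K. u x $ i = A i + inner (B i) x + C i * bubble K x"
    using Fc unfolding A_def B_def C_def by blast
  define g where "g = (\<lambda>i y. A i + inner (B i) y + C i * ((\<alpha>1 + inner \<beta>1 y) * (\<alpha>2 + inner \<beta>2 y) * (\<alpha>3 + inner \<beta>3 y)))"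
  define g' where "g' = (\<lambda>i y h. inner (B i) h + C i * (inner \<beta>1 h * (\<alpha>2 + inner \<beta>2 y) * (\<alpha>3 + inner \<beta>3 y)
       + (\<alpha>1 + inner \<beta>1 y) * inner \<beta>2 h * (\<alpha>3 + inner \<beta>3 y) + (\<alpha>1 + inner \<beta>1 y) * (\<alpha>2 + inner \<beta>2 y) * inner \<beta>3 h))"
  have gd: "(g i has_derivative g' i y) (at y)" for i y
    unfolding g_def g'_def by (rule poly_deriv)
  define G where "G = (\<lambda>y. g 1 y *\<^sub>R (axis 1 1 :: real^2) + g 2 y *\<^sub>R axis 2 1)"
  define G' where "G' = (\<lambda>y h. g' 1 y h *\<^sub>R (axis 1 1 :: real^2) + g' 2 y h *\<^sub>R axis 2 1)"
  have Gd: "(G has_derivative G' y) (at y)" for y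
    unfolding G_def G'_def by (intro derivative_intros gd)
  have uG: "u y = G y" if "y \<in> convex hull K" for y
  proof -
    have "u y $ i = g i y" for i using ABC that bub unfolding g_def by simp
    then show ?thesis unfolding G_def by (simp add: vec_eq_iff forall_2 axis_comp)
  qed
  have G'c: "G' y h $ i = g' i y h" for y h i
  proof -
    have "i = 1 \<or> i = 2" using exhaust_2 by blast
    then show ?thesis unfolding G'_def by (auto simp: axis_comp)
  qed
  define Pd where "Pd = (\<lambda>i j y. g' i y (axis j 1))"
  show ?thesis
  proof (intro exI conjI allI ballI)
    fix i j :: 2
    show "continuous_on UNIV (Pd i j)"
      unfolding Pd_def g'_def by (intro continuous_intros)
  next
    fix x i j assume x: "x \<in> interior (convex hull K)"
    have eq: "\<And>y. y \<in> interior (convex hull K) \<Longrightarrow> G y = u y"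
      using uG interior_subset by (metis subsetD)
    have hd: "(u has_derivative G' x) (at x)"
      by (rule has_derivative_transform_within_open[OF Gd open_interior x eq])
    have d: "u differentiable (at x)" using hd unfolding differentiable_def by blast
    have f: "frechet_derivative u (at x) = G' x" using frechet_derivative_at[OF hd] by (rule sym)
    have "grad u x = matrix (G' x)" unfolding grad_def using d f by (simp only: if_True)
    then show "grad u x $i$j = Pd i j x"
      unfolding Pd_def matrix_def by (simp only: vec_lambda_beta G'c)
  qed
qed

lemma Omega_in_cl: "Omega_hat L1 \<subseteq> Omega_hat_cl L1"
  by (auto simp: Omega_hat_def Omega_hat_cl_def)

lemma grad_props:
  assumes tri: "periodic_triangulation L1 T" and u: "u \<in> Vf_h L1 T"
  shows "negligible (\<Union>((\<lambda>K. frontier (convex hull K)) ` T))"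
    and "continuous_on (Omega_hat L1 - \<Union>((\<lambda>K. frontier (convex hull K)) ` T)) (\<lambda>x. grad u x $i$j)"
    and "\<exists>B. \<forall>x\<in>Omega_hat L1 - \<Union>((\<lambda>K. frontier (convex hull K)) ` T). \<bar>grad u x $i$j\<bar> \<le> B"
proof -
  define N2 where "N2 = \<Union>((\<lambda>K. frontier (convex hull K)) ` T)"
  have fT: "finite T" using tri_finT[OF tri] .
  show "negligible (\<Union>((\<lambda>K. frontier (convex hull K)) ` T))"
    using fT by (intro negligible_Union) (auto intro: negligible_convex_frontier)
  have "\<forall>K\<in>T. \<exists>Pd::2 \<Rightarrow> 2 \<Rightarrow> pt \<Rightarrow> real. (\<forall>i j. continuous_on UNIV (Pd i j)) \<and>
           (\<forall>x\<in>interior (convex hull K). \<forall>i j. grad u x $i$j = Pd i j x)"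
    using grad_local[OF tri u] by blast
  then obtain PD where PD: "\<And>K. K \<in> T \<Longrightarrow> (\<forall>i j. continuous_on UNIV (PD K i j)) \<and>
           (\<forall>x\<in>interior (convex hull K). \<forall>i j. grad u x $i$j = PD K i j x)"
    by metis
  have inK: "\<exists>K\<in>T. x \<in> interior (convex hull K)" if x: "x \<in> Omega_hat L1 - N2" for x
  proof -
    have "x \<in> Omega_hat_cl L1" using x Omega_in_cl by blast
    then have "x \<in> \<Union> ((\<lambda>K. convex hull K) ` T)" by (simp only: tri_cover[OF tri])
    then obtain K where K: "K \<in> T" "x \<in> convex hull K" by (rule UN_E)
    have "closed (convex hull K)"
      using finite_imp_compact_convex_hull[OF tri_finK[OF tri K(1)]] by (rule compact_imp_closed)
    moreover have "x \<notin> frontier (convex hull K)" using x K(1) unfolding N2_def by blast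
    ultimately have "x \<in> interior (convex hull K)" using K(2) unfolding frontier_def by simp
    then show ?thesis using K(1) by blast
  qed
  show "continuous_on (Omega_hat L1 - \<Union>((\<lambda>K. frontier (convex hull K)) ` T)) (\<lambda>x. grad u x $i$j)"
    unfolding N2_def[symmetric] continuous_on_eq_continuous_within
  proof
    fix x assume x: "x \<in> Omega_hat L1 - N2"
    obtain K where K: "K \<in> T" "x \<in> interior (convex hull K)" using inK[OF x] by blast
    have c: "isCont (PD K i j) x"
      using PD[OF K(1)] continuous_on_eq_continuous_at[OF open_UNIV] by blast
    have ev: "eventually (\<lambda>y. PD K i j y = grad u y $i$j) (at x)"
      unfolding eventually_at_topological
      using PD[OF K(1)] K(2) by (intro exI[of _ "interior (convex hull K)"]) auto
    have "((\<lambda>y. grad u y $i$j) \<longlongrightarrow> grad u x $i$j) (at x)" (is ?L)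
      using Lim_transform_eventually[OF c[unfolded continuous_at] ev] PD[OF K(1)] K(2) by simp
    then show "continuous (at x within Omega_hat L1 - N2) (\<lambda>x. grad u x $i$j)"
    proof -
      have "isCont (\<lambda>y. grad u y $i$j) x" using \<open>?L\<close> unfolding continuous_at .
      then show ?thesis by (rule continuous_at_imp_continuous_at_within)
    qed
  qed
  have "\<forall>K\<in>T. \<exists>B. \<forall>x\<in>convex hull K. \<bar>PD K i j x\<bar> \<le> B"
  proof
    fix K assume K: "K \<in> T"
    have "compact (PD K i j ` (convex hull K))"
    proof -
      have "continuous_on UNIV (PD K i j)" using PD[OF K] by blast
      then have "continuous_on (convex hull K) (PD K i j)" by (rule continuous_on_subset) simp
      then show ?thesis
        using compact_continuous_image finite_imp_compact_convex_hull[OF tri_finK[OF tri K]] by blast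
    qed
    then have "bounded (PD K i j ` (convex hull K))" by (rule compact_imp_bounded)
    then show "\<exists>B. \<forall>x\<in>convex hull K. \<bar>PD K i j x\<bar> \<le> B" unfolding bounded_iff by auto
  qed
  then obtain BB where BB: "\<And>K x. K \<in> T \<Longrightarrow> x \<in> convex hull K \<Longrightarrow> \<bar>PD K i j x\<bar> \<le> BB K" by metis
  show "\<exists>B. \<forall>x\<in>Omega_hat L1 - \<Union>((\<lambda>K. frontier (convex hull K)) ` T). \<bar>grad u x $i$j\<bar> \<le> B"
    unfolding N2_def[symmetric]
  proof (intro exI ballI)
    fix x assume x: "x \<in> Omega_hat L1 - N2"
    obtain K where K: "K \<in> T" "x \<in> interior (convex hull K)" using inK[OF x] by blast
    have "\<bar>grad u x $i$j\<bar> = \<bar>PD K i j x\<bar>" using PD[OF K(1)] K(2) by simp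
    also have "\<dots> \<le> BB K" using BB[OF K(1)] K(2) interior_subset by blast
    also have "\<dots> \<le> \<bar>BB K\<bar>" by simp
    also have "\<dots> \<le> (\<Sum>K\<in>T. \<bar>BB K\<bar>)" using fT K(1) by (intro member_le_sum) auto
    finally show "\<bar>grad u x $i$j\<bar> \<le> (\<Sum>K\<in>T. \<bar>BB K\<bar>)" .
  qed
qed

lemma strip_cl': "Omega_hat_cl L1 \<subseteq> strip"
  by (auto simp: Omega_hat_cl_def strip_def)


lemma GEN2:
  fixes f :: "'a::euclidean_space \<Rightarrow> real"
  assumes S: "S \<in> lmeasurable" and N: "negligible N" and c: "continuous_on (S - N) f"
    and B: "\<And>x. x \<in> S - N \<Longrightarrow> \<bar>f x\<bar> \<le> B"
  shows "set_integrable lebesgue S f"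
proof -
  have S': "S - N \<in> lmeasurable" using S N by (intro fmeasurable_Diff) (auto intro: negligible_imp_sets)
  have "set_integrable lebesgue (S - N) f"
    by (rule GEN[OF S' negligible_empty]) (use c B in auto)
  moreover have "{x \<in> (S - N) - S. f x \<noteq> 0} = {}" by blast
  then have "negligible {x \<in> (S - N) - S. f x \<noteq> 0}" by (simp only: negligible_empty)
  moreover have "negligible {x \<in> S - (S - N). f x \<noteq> 0}" by (rule negligible_subset[OF N]) auto
  ultimately show ?thesis using absolutely_integrable_spike_set_eq by blast
qed

lemma bnd_arith:
  fixes q g1 g2 g4 e y d Q G1 G2 G4 E D :: real
  assumes "\<bar>q\<bar> \<le> Q" "\<bar>g1\<bar> \<le> G1" "\<bar>g2\<bar> \<le> G2" "\<bar>g4\<bar> \<le> G4" "\<bar>e\<bar> \<le> E" "\<bar>y\<bar> \<le> 1" "\<bar>d\<bar> \<le> D"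
  shows "\<bar>q * (g1 * e - g2 * (y * d) + g4)\<bar> \<le> Q * (G1 * E + G2 * D + G4)"
proof -
  have a: "\<bar>g1 * e\<bar> \<le> G1 * E" unfolding abs_mult using assms by (intro mult_mono) auto
  have "\<bar>y * d\<bar> \<le> 1 * D" unfolding abs_mult using assms by (intro mult_mono) auto
  then have b: "\<bar>g2 * (y * d)\<bar> \<le> G2 * D" unfolding abs_mult[of g2] using assms
    by (intro mult_mono) auto
  have "\<bar>g1 * e - g2 * (y * d) + g4\<bar> \<le> G1 * E + G2 * D + G4" using a b assms(4) by linarith
  then show ?thesis unfolding abs_mult[of q] using assms(1) by (intro mult_mono) auto
qed

lemma IO_pB: "periodic_triangulation L1 T \<Longrightarrow> L1 > 0 \<Longrightarrow> q \<in> Qf_h L1 T \<Longrightarrow> u \<in> Vf_h L1 T \<Longrightarrow> e \<in> Vs_h L1 T \<Longrightarrow>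
   set_integrable lebesgue (Omega_hat L1) (\<lambda>x. q x * frob (grad u x) (MM e x))"
proof -
  assume tri: "periodic_triangulation L1 T" and L1: "L1 > 0" and q: "q \<in> Qf_h L1 T" and u: "u \<in> Vf_h L1 T" and e: "e \<in> Vs_h L1 T"
  define N2 where "N2 = \<Union>((\<lambda>K. frontier (convex hull K)) ` T)"
  define F where "F = (\<lambda>v::pt. v$1) ` \<Union>T"
  define NF where "NF = {x::pt. x$1 \<in> F}"
  have fF: "finite F" unfolding F_def using finite_verts[OF tri] by simp
  have nN2: "negligible N2" unfolding N2_def by (rule grad_props(1)[OF tri u])
  have "NF = (\<Union>c\<in>F. {x. inner (axis 1 1) x = c})" unfolding NF_def by (auto simp: inner2 axis_comp)
  moreover have "negligible (\<Union>c\<in>F. {x::pt. inner (axis 1 1) x = c})"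
    using fF by (intro negligible_Union) (auto intro!: negligible_hyperplane simp: axis_eq_0_iff)
  ultimately have nNF: "negligible NF" by simp
  define S where "S = Omega_hat L1 - (N2 \<union> NF)"
  have Ssub: "S \<subseteq> Omega_hat L1 - N2" unfolding S_def by blast
  have Sx: "x$1 \<in> {0<..<L1} - F" "\<bar>x$2\<bar> \<le> 1" "x \<in> Omega_hat_cl L1" if "x \<in> S" for x
    using that unfolding S_def NF_def Omega_hat_def Omega_hat_cl_def by auto
  define h where "h = (\<lambda>x. q x * (grad u x $1$1 * e (x$1) - grad u x $1$2 * (x$2 * dx e (x$1)) + grad u x $2$2))"
  have hq: "(\<lambda>x. q x * frob (grad u x) (MM e x)) = h"
    unfolding h_def by (rule ext) (simp add: frob_def sum_2 MM_def)
  have cq: "continuous_on (Omega_hat_cl L1) q"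
    using q strip_cl' unfolding Qf_h_def by (auto intro: continuous_on_subset)
  have ce: "continuous_on UNIV e" using e unfolding Vs_h_def by blast
  have cg: "continuous_on S (\<lambda>x. grad u x $i$j)" for i j
    using continuous_on_subset[OF grad_props(2)[OF tri u] Ssub[unfolded N2_def]] .
  have cd: "continuous_on S (\<lambda>x. dx e (x$1))"
    by (rule continuous_on_compose2[OF dx_props(1)[OF tri e], of S "\<lambda>x. x$1"])
      (use Sx in \<open>auto intro: continuous_intros simp: F_def\<close>)
  have cont: "continuous_on S h" unfolding h_def
    by (intro continuous_intros cg cd continuous_on_subset[OF cq] continuous_on_compose2[OF ce])
      (use Sx in auto)
  obtain Bq where Bq: "\<forall>x\<in>Omega_hat_cl L1. \<bar>q x\<bar> \<le> Bq"
  proof -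
    have "compact (q ` Omega_hat_cl L1)"
      by (rule compact_continuous_image[OF cq]) (simp add: cl_cbox)
    then have "bounded (q ` Omega_hat_cl L1)" by (rule compact_imp_bounded)
    then obtain a where "\<forall>y\<in>q ` Omega_hat_cl L1. norm y \<le> a" unfolding bounded_iff by blast
    then show ?thesis using that by auto
  qed
  obtain Be where Be: "\<forall>s\<in>{0..L1}. \<bar>e s\<bar> \<le> Be"
  proof -
    have "compact (e ` {0..L1})"
      by (rule compact_continuous_image[OF continuous_on_subset[OF ce]]) auto
    then have "bounded (e ` {0..L1})" by (rule compact_imp_bounded)
    then obtain a where "\<forall>y\<in>e ` {0..L1}. norm y \<le> a" unfolding bounded_iff by blast
    then show ?thesis using that by auto
  qed
  obtain Bd where Bd: "\<forall>s\<in>{0<..<L1}. \<bar>dx e s\<bar> \<le> Bd" using dx_props(2)[OF tri e] by blast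
  obtain B11 where B11: "\<forall>x\<in>Omega_hat L1 - N2. \<bar>grad u x $1$1\<bar> \<le> B11" using grad_props(3)[OF tri u] unfolding N2_def by blast
  obtain B12 where B12: "\<forall>x\<in>Omega_hat L1 - N2. \<bar>grad u x $1$2\<bar> \<le> B12" using grad_props(3)[OF tri u] unfolding N2_def by blast
  obtain B22 where B22: "\<forall>x\<in>Omega_hat L1 - N2. \<bar>grad u x $2$2\<bar> \<le> B22" using grad_props(3)[OF tri u] unfolding N2_def by blast
  have "set_integrable lebesgue (Omega_hat L1) h"
  proof (rule GEN2[where N="N2 \<union> NF" and B="Bq * (B11 * Be + B12 * Bd + B22)"])
    show "Omega_hat L1 \<in> lmeasurable" unfolding O_box by (intro lmeasurable_open) auto
    show "negligible (N2 \<union> NF)" using nN2 nNF by (rule negligible_Un)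
    show "continuous_on (Omega_hat L1 - (N2 \<union> NF)) h" using cont unfolding S_def .
    fix x assume x: "x \<in> Omega_hat L1 - (N2 \<union> NF)"
    then have xS: "x \<in> S" unfolding S_def .
    have xN2: "x \<in> Omega_hat L1 - N2" using x by blast
    show "\<bar>h x\<bar> \<le> Bq * (B11 * Be + B12 * Bd + B22)" unfolding h_def
      by (rule bnd_arith) (use Bq Be Bd B11 B12 B22 Sx[OF xS] xN2 in auto)
  qed
  then show ?thesis unfolding hq .
qed

lemma set_int_diff_zero:
  fixes f g :: "'a \<Rightarrow> real"
  assumes "set_integrable M A g" "(LINT x:A|M. g x) = 0"
  shows "(LINT x:A|M. f x - g x) = (LINT x:A|M. f x)"
proof (cases "set_integrable M A f")
  case True then show ?thesis using assms by simp
next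
  case False
  have "\<not> set_integrable M A (\<lambda>x. f x - g x)"
  proof
    assume "set_integrable M A (\<lambda>x. f x - g x)"
    from set_integral_add(1)[OF this assms(1)] False show False by simp
  qed
  then show ?thesis using False
    unfolding set_integrable_def set_lebesgue_integral_def
    by (simp add: not_integrable_integral_eq)
qed

lemma R2_expand:
  "R2_form L1 lap rho_f rho_s mu g1 g2 g3 tau p u xi eta k (u k) (xi k) =
      rho_f * intO L1 (\<lambda>x. inner ((1/tau) *\<^sub>R (u k x - u (k-1) x)) (u k x) * eta k (x$1))
    + 1/2 * rho_f * intO L1 (\<lambda>x. (eta k (x$1) - eta (k-1) (x$1)) / tau * inner (2 *\<^sub>R u (k-1) x - u k x) (u k x))
    + intO L1 (\<lambda>x. frob ((2*mu) *\<^sub>R symm (grad (u k) x ** matrix_inv (FF (eta k) x)) - p k x *\<^sub>R mat 1)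
                        (grad (u k) x ** matrix_inv (FF (eta k) x)) * eta k (x$1))
    + rho_s * intS L1 (\<lambda>s. (xi k s - xi (k-1) s) / tau * xi k s)
    + intS L1 (\<lambda>s. g1 * dx (eta (Suc k)) s * dx (xi k) s + g2 * dx (\<lambda>s. - lap (eta (Suc k)) s) s * dx (xi k) s
                     + g3 * dx (xi k) s * dx (xi k) s)"
  by (simp add: R2_form_def Let_def intO_def)

lemma strip_cl: "Omega_hat_cl L1 \<subseteq> strip"
  by (auto simp: Omega_hat_cl_def strip_def)

lemma Omega_sub: "x \<in> Omega_hat L1 \<Longrightarrow> x$1 \<in> {0<..<L1}"
  by (auto simp: Omega_hat_def)

lemma cont_comp1: "continuous_on UNIV e \<Longrightarrow> continuous_on S (\<lambda>x::pt. e (x$1))"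
  by (rule continuous_on_compose2[of UNIV e]) (auto intro: continuous_intros)

lemma Vf_cont: "u \<in> Vf_h L1 T \<Longrightarrow> continuous_on (Omega_hat_cl L1) u"
  using strip_cl by (auto simp: Vf_h_def intro: continuous_on_subset)

lemma pw_alg: fixes A B :: "real^2" assumes t: "tau \<noteq> 0"
  shows "2*tau*(inner ((1/tau)*\<^sub>R(A-B)) A * b) + tau*((b - c)/tau * inner (2*\<^sub>R B - A) A)
     = b*(norm A)\<^sup>2 - c*(norm B)\<^sup>2 + tau*tau*(c*(norm((1/tau)*\<^sub>R(A-B)))\<^sup>2)"
proof -
  have n: "(norm ((1/tau)*\<^sub>R(A-B)))\<^sup>2 = (inner A A - 2*inner A B + inner B B)/tau^2"
  proof -
    have "(norm ((1/tau)*\<^sub>R(A-B)))\<^sup>2 = inner ((1/tau)*\<^sub>R(A-B)) ((1/tau)*\<^sub>R(A-B))"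
      by (rule power2_norm_eq_inner)
    also have "\<dots> = (inner A A - 2*inner A B + inner B B)/tau^2" using t
      by (simp add: inner_diff_left inner_diff_right inner_commute power2_eq_square field_simps)
    finally show ?thesis .
  qed
  have "inner B A = inner A B" by (simp add: inner_commute)
  then show ?thesis using t unfolding n power2_norm_eq_inner
    by (simp add: power2_norm_eq_inner inner_diff_left inner_diff_right inner_commute power2_eq_square field_simps)
qed
lemma combine:
  fixes rf rs mu g1 g2 g3 \<tau> F1 F2 F4 F5 F6 Ob Oc Od Ov SX SX' SdX BaX Bz Bxx Da Db DX La Lb LX :: real
  assumes "rf*F1 + 1/2*rf*F2 + F4 + rs*F5 + F6 = 0" "2*\<tau>*F1 + \<tau>*F2 = Ob - Oc + \<tau>*\<tau>*Od" "F4 = 2*mu*Ov"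
   "2*\<tau>*F5 = SX - SX' + \<tau>*\<tau>*SdX" "F6 = g1*BaX + g2*Bz + g3*Bxx" "2*\<tau>*BaX = Da - Db + \<tau>*\<tau>*DX"
   "2*\<tau>*Bz = La - Lb + \<tau>*\<tau>*LX" "Bxx = DX"
  shows "(rf/2*Ob + rs/2*SX + g1/2*Da + g2/2*La) + \<tau>*(2*mu*Ov + g3*DX + (rf*\<tau>/2*Od + rs*\<tau>/2*SdX + g1*\<tau>/2*DX + g2*\<tau>/2*LX))
     = rf/2*Oc + rs/2*SX' + g1/2*Db + g2/2*Lb"
proof -
  have "\<tau>*(rf*F1 + 1/2*rf*F2 + F4 + rs*F5 + F6) = 0" using assms(1) by simp
  then have "rf/2*(2*\<tau>*F1 + \<tau>*F2) + \<tau>*F4 + rs/2*(2*\<tau>*F5) + g1/2*(2*\<tau>*BaX) + g2/2*(2*\<tau>*Bz) + \<tau>*g3*Bxx = 0"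
    using assms(5) by (simp add: algebra_simps)
  then show ?thesis unfolding assms(2,4,6,7,8,3) by (simp add: algebra_simps)
qed
lemma g1alg: fixes t BaX Baa Bab BbX Bba Bbb BXX BXa BXb :: real
  assumes "t \<noteq> 0" "BaX = (Baa - Bab)/t" "BbX = (Bba - Bbb)/t" "BXX = (BXa - BXb)/t" "BXa = BaX" "BXb = BbX" "Bba = Bab"
  shows "2*t*BaX = Baa - Bbb + t*t*BXX"
proof -
  have 1: "Baa = Bab + BaX*t" using assms by (simp add: field_simps)
  have 2: "Bab = Bbb + BbX*t" using assms by (simp add: field_simps)
  have 3: "BaX = BbX + BXX*t" using assms by (simp add: field_simps)
  show ?thesis unfolding 1 2 3 by (simp add: algebra_simps)
qed
lemma g2alg: fixes t lX la lb :: real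
  assumes "t \<noteq> 0" "lX = (la - lb)/t" shows "2*t*(lX*la) = la\<^sup>2 - lb\<^sup>2 + t*t*lX\<^sup>2"
proof -
  have 1: "la = lb + lX*t" using assms by (simp add: field_simps)
  show ?thesis unfolding 1 by (simp add: algebra_simps power2_eq_square)
qed

theorem mainTheorem5:
  fixes L1 tau rho_f rho_s mu g1 g2 g3 :: real
    and N :: nat
    and T :: "pt set set"
    and lap :: "(real \<Rightarrow> real) \<Rightarrow> real \<Rightarrow> real"
    and p :: "nat \<Rightarrow> pt \<Rightarrow> real"
    and u :: "nat \<Rightarrow> pt \<Rightarrow> real^2"
    and xi eta :: "nat \<Rightarrow> real \<Rightarrow> real"
  assumes "L1 > 0" and "tau > 0"
    and "rho_f > 0" and "rho_s > 0" and "mu > 0" and "g1 > 0" and "g2 > 0" and "g3 \<ge> 0"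
    and "periodic_triangulation L1 T"
    and "is_disc_lap L1 T lap"
    and "schemeR L1 T lap rho_f rho_s mu g1 g2 g3 tau N p u xi eta"
    and "\<forall>k \<le> Suc N. \<forall>s\<in>{0<..<L1}. eta k s > 0"
  shows "\<forall>m\<in>{1..N}.
     energy L1 lap rho_f rho_s g1 g2 u xi eta m
     + tau * (\<Sum>k=1..m.
          2 * mu * intO L1 (\<lambda>x. eta k (x$1) *
               frob (symm (grad (u k) x ** matrix_inv (FF (eta k) x)))
                    (symm (grad (u k) x ** matrix_inv (FF (eta k) x))))
        + g3 * intS L1 (\<lambda>s. (dx (xi k) s)\<^sup>2)
        + Dnum L1 lap rho_f rho_s g1 g2 tau u xi eta k)
     = energy L1 lap rho_f rho_s g1 g2 u xi eta 0"
proof -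
  note L1 = assms(1) and tau = assms(2) and tri = assms(9) and lapd = assms(10) and pos = assms(12)
  have sch: "u 0 \<in> Vf_h L1 T" "xi 0 \<in> Vs_h L1 T" "eta 0 \<in> Vs_h L1 T"
     "eta 1 = (\<lambda>s. eta 0 s + tau * xi 0 s)"
     "\<And>k. k\<in>{1..N} \<Longrightarrow> p k \<in> Qf_h L1 T \<and> u k \<in> Vf_h L1 T \<and> xi k \<in> Vs_h L1 T \<and> eta (Suc k) \<in> Vs_h L1 T \<and>
        (\<forall>s\<in>{0<..<L1}. u k (vector [s, 1]) = vector [0, xi k s]) \<and>
        xi k = (\<lambda>s. (eta (Suc k) s - eta k s) / tau) \<and>
        (\<forall>q\<in>Qf_h L1 T. intO L1 (\<lambda>x. q x * frob (grad (u k) x) (MM (eta k) x)) = 0) \<and>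
        (\<forall>phi\<in>Vf_h L1 T. \<forall>psi\<in>Vs_h L1 T.
            (\<forall>s\<in>{0<..<L1}. phi (vector [s, 1]) = vector [0, psi s]) \<longrightarrow>
            R2_form L1 lap rho_f rho_s mu g1 g2 g3 tau p u xi eta k phi psi = 0)"
    using assms(11) unfolding schemeR_def by blast+
  have etaV: "eta j \<in> Vs_h L1 T" if "j \<le> Suc N" for j
  proof (cases j)
    case 0 then show ?thesis using sch by simp
  next
    case (Suc i) show ?thesis
    proof (cases i)
      case 0 then show ?thesis using sch(1-4) Vs_lin[OF sch(3) sch(2), of 1 tau] Suc by simp
    next
      case (Suc i') then have "i \<in> {1..N}" using \<open>j = Suc i\<close> that by auto
      then show ?thesis using sch(5)[of i] \<open>j = Suc i\<close> by blast
    qed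
  qed
  have xiV: "xi j \<in> Vs_h L1 T" and uV: "u j \<in> Vf_h L1 T" if "j \<le> N" for j
    using sch(5)[of j] sch(1,2) that by (cases j; auto)+
  define V where "V = (\<lambda>k. 2 * mu * intO L1 (\<lambda>x. eta k (x$1) *
               frob (symm (grad (u k) x ** matrix_inv (FF (eta k) x)))
                    (symm (grad (u k) x ** matrix_inv (FF (eta k) x))))
        + g3 * intS L1 (\<lambda>s. (dx (xi k) s)\<^sup>2)
        + Dnum L1 lap rho_f rho_s g1 g2 tau u xi eta k)"
  define E where "E = energy L1 lap rho_f rho_s g1 g2 u xi eta"
  have step: "E k + tau * V k = E (k-1)" if k: "k \<in> {1..N}" for k
  proof -
    have k1: "1 \<le> k" "k \<le> N" using k by auto
    obtain P where P: "P = p k" by simp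
    have sk: "p k \<in> Qf_h L1 T" "u k \<in> Vf_h L1 T" "xi k \<in> Vs_h L1 T" "eta (Suc k) \<in> Vs_h L1 T"
      "\<forall>s\<in>{0<..<L1}. u k (vector [s, 1]) = vector [0, xi k s]"
      "xi k = (\<lambda>s. (eta (Suc k) s - eta k s) / tau)"
      "\<forall>q\<in>Qf_h L1 T. intO L1 (\<lambda>x. q x * frob (grad (u k) x) (MM (eta k) x)) = 0"
      "\<forall>phi\<in>Vf_h L1 T. \<forall>psi\<in>Vs_h L1 T.
            (\<forall>s\<in>{0<..<L1}. phi (vector [s, 1]) = vector [0, psi s]) \<longrightarrow>
            R2_form L1 lap rho_f rho_s mu g1 g2 g3 tau p u xi eta k phi psi = 0"
      using sch(5)[OF k] by blast+
    have R2: "R2_form L1 lap rho_f rho_s mu g1 g2 g3 tau p u xi eta k (u k) (xi k) = 0"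
      using sk(8) sk(2,3,5) by blast
    note R2 = R2[unfolded R2_expand]
    have aV: "eta (Suc k) \<in> Vs_h L1 T" and bV: "eta k \<in> Vs_h L1 T" and cV: "eta (k-1) \<in> Vs_h L1 T"
      using etaV k1 by auto
    have XV: "xi k \<in> Vs_h L1 T" and X'V: "xi (k-1) \<in> Vs_h L1 T" using xiV k1 by auto
    have UV: "u k \<in> Vf_h L1 T" and U'V: "u (k-1) \<in> Vf_h L1 T" using uV k1 by auto
    have cU: "continuous_on (Omega_hat_cl L1) (u k)" "continuous_on (Omega_hat_cl L1) (u (k-1))"
      using Vf_cont UV U'V by blast+
    have ce: "continuous_on UNIV (eta j)" if "j \<le> Suc N" for j using Vs_cont etaV that by blast
    have cea: "continuous_on S (\<lambda>x::pt. eta j (x$1))" if "j \<le> Suc N" for j S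
      using cont_comp1[OF ce[OF that]] .
    have cb: "continuous_on S (\<lambda>x::pt. eta k (x$1))" and cc: "continuous_on S (\<lambda>x::pt. eta (k-1) (x$1))" for S
      using cea k1 by auto
    have fl: "2 * tau * intO L1 (\<lambda>x. inner ((1/tau) *\<^sub>R (u k x - u (k-1) x)) (u k x) * eta k (x$1))
        + tau * intO L1 (\<lambda>x. (eta k (x$1) - eta (k-1) (x$1)) / tau * inner (2 *\<^sub>R u (k-1) x - u k x) (u k x))
        = intO L1 (\<lambda>x. eta k (x$1) * (norm (u k x))\<^sup>2) - intO L1 (\<lambda>x. eta (k-1) (x$1) * (norm (u (k-1) x))\<^sup>2)
          + tau * tau * intO L1 (\<lambda>x. eta (k-1) (x$1) * (norm ((1/tau) *\<^sub>R (u k x - u (k-1) x)))\<^sup>2)" (is "_ = ?rhs")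
    proof -
      have i1: "set_integrable lebesgue (Omega_hat L1) (\<lambda>x. inner ((1/tau) *\<^sub>R (u k x - u (k-1) x)) (u k x) * eta k (x$1))"
        by (rule IO_cont) (intro continuous_intros cU cb)
      have i2: "set_integrable lebesgue (Omega_hat L1) (\<lambda>x. (eta k (x$1) - eta (k-1) (x$1)) / tau * inner (2 *\<^sub>R u (k-1) x - u k x) (u k x))"
        by (rule IO_cont, intro continuous_intros cU cb cc) (use tau in auto)
      have i3: "set_integrable lebesgue (Omega_hat L1) (\<lambda>x. eta k (x$1) * (norm (u k x))\<^sup>2)"
        by (rule IO_cont) (intro continuous_intros cU cb cc)
      have i4: "set_integrable lebesgue (Omega_hat L1) (\<lambda>x. eta (k-1) (x$1) * (norm (u (k-1) x))\<^sup>2)"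
        by (rule IO_cont) (intro continuous_intros cU cb cc)
      have i5: "set_integrable lebesgue (Omega_hat L1) (\<lambda>x. eta (k-1) (x$1) * (norm ((1/tau) *\<^sub>R (u k x - u (k-1) x)))\<^sup>2)"
        by (rule IO_cont) (intro continuous_intros cU cb cc)
      have pw: "2 * tau * (inner ((1/tau) *\<^sub>R (u k x - u (k-1) x)) (u k x) * eta k (x$1))
        + tau * ((eta k (x$1) - eta (k-1) (x$1)) / tau * inner (2 *\<^sub>R u (k-1) x - u k x) (u k x))
        = eta k (x$1) * (norm (u k x))\<^sup>2 - eta (k-1) (x$1) * (norm (u (k-1) x))\<^sup>2
          + tau * tau * (eta (k-1) (x$1) * (norm ((1/tau) *\<^sub>R (u k x - u (k-1) x)))\<^sup>2)" for x
        using pw_alg[of tau "u k x" "u (k-1) x" "eta k (x$1)" "eta (k-1) (x$1)"] tau by simp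
      have "2 * tau * intO L1 (\<lambda>x. inner ((1/tau) *\<^sub>R (u k x - u (k-1) x)) (u k x) * eta k (x$1))
        + tau * intO L1 (\<lambda>x. (eta k (x$1) - eta (k-1) (x$1)) / tau * inner (2 *\<^sub>R u (k-1) x - u k x) (u k x))
        = intO L1 (\<lambda>x. 2 * tau * (inner ((1/tau) *\<^sub>R (u k x - u (k-1) x)) (u k x) * eta k (x$1))
        + tau * ((eta k (x$1) - eta (k-1) (x$1)) / tau * inner (2 *\<^sub>R u (k-1) x - u k x) (u k x)))"
        unfolding intO_def
        by (simp only: set_integral_add(2)[OF set_integrable_mult_right[OF i1] set_integrable_mult_right[OF i2]]
          set_integral_mult_right)
      also have "\<dots> = intO L1 (\<lambda>x. eta k (x$1) * (norm (u k x))\<^sup>2 - eta (k-1) (x$1) * (norm (u (k-1) x))\<^sup>2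
          + tau * tau * (eta (k-1) (x$1) * (norm ((1/tau) *\<^sub>R (u k x - u (k-1) x)))\<^sup>2))"
        by (simp only: pw)
      also have "\<dots> = ?rhs"
        unfolding intO_def
        by (simp only: set_integral_add(2)[OF set_integral_diff(1)[OF i3 i4] set_integrable_mult_right[OF i5]]
          set_integral_diff(2)[OF i3 i4] set_integral_mult_right)
      finally show ?thesis .
    qed
    have t4: "intO L1 (\<lambda>x. frob ((2*mu) *\<^sub>R symm (grad (u k) x ** matrix_inv (FF (eta k) x)) - p k x *\<^sub>R mat 1)
                        (grad (u k) x ** matrix_inv (FF (eta k) x)) * eta k (x$1))
       = 2 * mu * intO L1 (\<lambda>x. eta k (x$1) *
               frob (symm (grad (u k) x ** matrix_inv (FF (eta k) x)))
                    (symm (grad (u k) x ** matrix_inv (FF (eta k) x))))"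
    proof -
      have pw4: "frob ((2*mu) *\<^sub>R symm (grad (u k) x ** matrix_inv (FF (eta k) x)) - p k x *\<^sub>R mat 1)
                        (grad (u k) x ** matrix_inv (FF (eta k) x)) * eta k (x$1) = 2 * mu * (eta k (x$1) * frob (symm (grad (u k) x ** matrix_inv (FF (eta k) x)))
                    (symm (grad (u k) x ** matrix_inv (FF (eta k) x)))) - p k x * frob (grad (u k) x) (MM (eta k) x)"
        if "x \<in> Omega_hat L1" for x
      proof -
        have "eta k (x$1) > 0" using pos k1 Omega_sub that by auto
        then show ?thesis by (rule T4_pt)
      qed
      have "intO L1 (\<lambda>x. frob ((2*mu) *\<^sub>R symm (grad (u k) x ** matrix_inv (FF (eta k) x)) - p k x *\<^sub>R mat 1)
                        (grad (u k) x ** matrix_inv (FF (eta k) x)) * eta k (x$1))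
        = intO L1 (\<lambda>x. 2 * mu * (eta k (x$1) * frob (symm (grad (u k) x ** matrix_inv (FF (eta k) x)))
                    (symm (grad (u k) x ** matrix_inv (FF (eta k) x)))) - p k x * frob (grad (u k) x) (MM (eta k) x))"
        unfolding intO_def
        by (rule set_lebesgue_integral_cong) (simp_all add: pw4)
      also have "\<dots> = intO L1 (\<lambda>x. 2 * mu * (eta k (x$1) * frob (symm (grad (u k) x ** matrix_inv (FF (eta k) x)))
                    (symm (grad (u k) x ** matrix_inv (FF (eta k) x)))))"
        unfolding intO_def
        by (rule set_int_diff_zero[OF IO_pB[OF tri L1 sk(1) UV bV]]) (use sk(7) sk(1) in \<open>auto simp: intO_def\<close>)
      also have "\<dots> = 2 * mu * intO L1 (\<lambda>x. eta k (x$1) *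
               frob (symm (grad (u k) x ** matrix_inv (FF (eta k) x)))
                    (symm (grad (u k) x ** matrix_inv (FF (eta k) x))))"
        unfolding intO_def by (simp only: set_integral_mult_right)
      finally show ?thesis .
    qed
    have cX: "continuous_on S (xi k)" "continuous_on S (xi (k-1))" for S using Vs_cont XV X'V by blast+
    have f5: "2 * tau * intS L1 (\<lambda>s. (xi k s - xi (k-1) s) / tau * xi k s)
       = intS L1 (\<lambda>s. (xi k s)\<^sup>2) - intS L1 (\<lambda>s. (xi (k-1) s)\<^sup>2) + tau * tau * intS L1 (\<lambda>s. ((xi k s - xi (k-1) s) / tau)\<^sup>2)"
    proof -
      have j1: "set_integrable lebesgue {0<..<L1} (\<lambda>s. (xi k s - xi (k-1) s) / tau * xi k s)"
        by (rule IS_cont, intro continuous_intros cX) (use tau in auto)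
      have j2: "set_integrable lebesgue {0<..<L1} (\<lambda>s. (xi k s)\<^sup>2)"
        by (rule IS_cont, intro continuous_intros cX)
      have j3: "set_integrable lebesgue {0<..<L1} (\<lambda>s. (xi (k-1) s)\<^sup>2)"
        by (rule IS_cont, intro continuous_intros cX)
      have j4: "set_integrable lebesgue {0<..<L1} (\<lambda>s. ((xi k s - xi (k-1) s) / tau)\<^sup>2)"
        by (rule IS_cont, intro continuous_intros cX) (use tau in auto)
      have pw: "2 * tau * ((xi k s - xi (k-1) s) / tau * xi k s)
         = (xi k s)\<^sup>2 - (xi (k-1) s)\<^sup>2 + tau * tau * ((xi k s - xi (k-1) s) / tau)\<^sup>2" for s
        using tau by (simp add: field_simps power2_eq_square)
      have "2 * tau * intS L1 (\<lambda>s. (xi k s - xi (k-1) s) / tau * xi k s)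
          = intS L1 (\<lambda>s. 2 * tau * ((xi k s - xi (k-1) s) / tau * xi k s))"
        unfolding intS_def by (simp only: set_integral_mult_right)
      also have "\<dots> = intS L1 (\<lambda>s. (xi k s)\<^sup>2 - (xi (k-1) s)\<^sup>2 + tau * tau * ((xi k s - xi (k-1) s) / tau)\<^sup>2)"
        by (simp only: pw)
      also have "\<dots> = intS L1 (\<lambda>s. (xi k s)\<^sup>2) - intS L1 (\<lambda>s. (xi (k-1) s)\<^sup>2) + tau * tau * intS L1 (\<lambda>s. ((xi k s - xi (k-1) s) / tau)\<^sup>2)"
        unfolding intS_def
        by (simp only: set_integral_add(2)[OF set_integral_diff(1)[OF j2 j3] set_integrable_mult_right[OF j4]]
          set_integral_diff(2)[OF j2 j3] set_integral_mult_right)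
      finally show ?thesis .
    qed
    have lapV: "lap e \<in> Vs_h L1 T" and lapI: "\<And>psi. psi \<in> Vs_h L1 T \<Longrightarrow> intS L1 (\<lambda>s. lap e s * psi s) = - intS L1 (\<lambda>s. dx e s * dx psi s)"
      if "e \<in> Vs_h L1 T" for e
      using lapd that unfolding is_disc_lap_def by blast+
    have zV: "(\<lambda>s. - lap (eta (Suc k)) s) \<in> Vs_h L1 T"
      using Vs_lin[OF lapV[OF aV] lapV[OF aV], of "-1" 0] by simp
    have f6: "intS L1 (\<lambda>s. g1 * dx (eta (Suc k)) s * dx (xi k) s + g2 * dx (\<lambda>s. - lap (eta (Suc k)) s) s * dx (xi k) s
                     + g3 * dx (xi k) s * dx (xi k) s)
       = g1 * intS L1 (\<lambda>s. dx (eta (Suc k)) s * dx (xi k) s) + g2 * intS L1 (\<lambda>s. dx (\<lambda>s. - lap (eta (Suc k)) s) s * dx (xi k) s)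
         + g3 * intS L1 (\<lambda>s. dx (xi k) s * dx (xi k) s)"
    proof -
      have j1: "set_integrable lebesgue {0<..<L1} (\<lambda>s. dx (eta (Suc k)) s * dx (xi k) s)" by (rule IS_dx[OF tri L1 aV XV])
      have j2: "set_integrable lebesgue {0<..<L1} (\<lambda>s. dx (\<lambda>s. - lap (eta (Suc k)) s) s * dx (xi k) s)" by (rule IS_dx[OF tri L1 zV XV])
      have j3: "set_integrable lebesgue {0<..<L1} (\<lambda>s. dx (xi k) s * dx (xi k) s)" by (rule IS_dx[OF tri L1 XV XV])
      have e: "\<And>s. g1 * dx (eta (Suc k)) s * dx (xi k) s + g2 * dx (\<lambda>s. - lap (eta (Suc k)) s) s * dx (xi k) s
                     + g3 * dx (xi k) s * dx (xi k) s = g1 * (dx (eta (Suc k)) s * dx (xi k) s) + g2 * (dx (\<lambda>s. - lap (eta (Suc k)) s) s * dx (xi k) s)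
                     + g3 * (dx (xi k) s * dx (xi k) s)" by (simp add: algebra_simps)
      show ?thesis unfolding intS_def e
        by (simp only: set_integral_add(2)[OF set_integral_add(1)[OF set_integrable_mult_right[OF j1] set_integrable_mult_right[OF j2]] set_integrable_mult_right[OF j3]]
           set_integral_add(2)[OF set_integrable_mult_right[OF j1] set_integrable_mult_right[OF j2]] set_integral_mult_right)
    qed
    have Bsym: "intS L1 (\<lambda>s. dx f s * dx g s) = intS L1 (\<lambda>s. dx g s * dx f s)" for f g
      by (simp add: mult.commute)
    have Xdef: "(\<lambda>s. (eta (Suc k) s - eta k s) / tau) = xi k" using sk(6) by simp
    have BaX: "intS L1 (\<lambda>s. dx (eta (Suc k)) s * dx (xi k) s) = (intS L1 (\<lambda>s. dx (eta (Suc k)) s * dx (eta (Suc k)) s) - intS L1 (\<lambda>s. dx (eta (Suc k)) s * dx (eta k) s)) / tau"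
      using B_comb[OF lapd aV aV bV, of tau] unfolding Xdef .
    have BbX: "intS L1 (\<lambda>s. dx (eta k) s * dx (xi k) s) = (intS L1 (\<lambda>s. dx (eta k) s * dx (eta (Suc k)) s) - intS L1 (\<lambda>s. dx (eta k) s * dx (eta k) s)) / tau"
      using B_comb[OF lapd bV aV bV, of tau] unfolding Xdef .
    have BXX: "intS L1 (\<lambda>s. dx (xi k) s * dx (xi k) s) = (intS L1 (\<lambda>s. dx (xi k) s * dx (eta (Suc k)) s) - intS L1 (\<lambda>s. dx (xi k) s * dx (eta k) s)) / tau"
      using B_comb[OF lapd XV aV bV, of tau] unfolding Xdef .
    have g1f: "2 * tau * intS L1 (\<lambda>s. dx (eta (Suc k)) s * dx (xi k) s)
       = intS L1 (\<lambda>s. (dx (eta (Suc k)) s)\<^sup>2) - intS L1 (\<lambda>s. (dx (eta k) s)\<^sup>2) + tau * tau * intS L1 (\<lambda>s. (dx (xi k) s)\<^sup>2)"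
    proof -
      have q: "\<And>f. intS L1 (\<lambda>s. (dx f s)\<^sup>2) = intS L1 (\<lambda>s. dx f s * dx f s)" by (simp add: power2_eq_square)
      show ?thesis unfolding q
        by (rule g1alg[OF _ BaX BbX BXX Bsym[of "xi k" "eta (Suc k)"] Bsym[of "xi k" "eta k"]
        Bsym[of "eta k" "eta (Suc k)"]]) (use tau in simp)
    qed
    have g2f: "2 * tau * intS L1 (\<lambda>s. dx (\<lambda>s. - lap (eta (Suc k)) s) s * dx (xi k) s)
       = intS L1 (\<lambda>s. (lap (eta (Suc k)) s)\<^sup>2) - intS L1 (\<lambda>s. (lap (eta k) s)\<^sup>2) + tau * tau * intS L1 (\<lambda>s. (lap (xi k) s)\<^sup>2)"
    proof -
      have cl: "continuous_on S (lap (eta (Suc k)))" "continuous_on S (lap (eta k))" "continuous_on S (lap (xi k))" for S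
        using Vs_cont lapV aV bV XV by blast+
      have "intS L1 (\<lambda>s. lap (xi k) s * - lap (eta (Suc k)) s) = - intS L1 (\<lambda>s. dx (xi k) s * dx (\<lambda>s. - lap (eta (Suc k)) s) s)"
        using lapI[OF XV zV] .
      moreover have "intS L1 (\<lambda>s. lap (xi k) s * - lap (eta (Suc k)) s) = - intS L1 (\<lambda>s. lap (xi k) s * lap (eta (Suc k)) s)"
      proof -
        have "(\<lambda>s. lap (xi k) s * - lap (eta (Suc k)) s) = (\<lambda>s. (-1) * (lap (xi k) s * lap (eta (Suc k)) s))" by simp
        then show ?thesis unfolding intS_def by (simp only: set_integral_mult_right)
      qed
      ultimately have e1: "intS L1 (\<lambda>s. dx (\<lambda>s. - lap (eta (Suc k)) s) s * dx (xi k) s) = intS L1 (\<lambda>s. lap (xi k) s * lap (eta (Suc k)) s)"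
        using Bsym by simp
      have ll: "lap (xi k) s = (lap (eta (Suc k)) s - lap (eta k) s) / tau" if "s \<in> {0<..<L1}" for s
        using lap_lin[OF lapd aV bV L1 that, of tau] unfolding Xdef .
      have "2 * tau * intS L1 (\<lambda>s. lap (xi k) s * lap (eta (Suc k)) s) = intS L1 (\<lambda>s. 2 * tau * (lap (xi k) s * lap (eta (Suc k)) s))"
        unfolding intS_def by (simp only: set_integral_mult_right)
      also have "\<dots> = intS L1 (\<lambda>s. (lap (eta (Suc k)) s)\<^sup>2 - (lap (eta k) s)\<^sup>2 + tau * tau * (lap (xi k) s)\<^sup>2)"
        unfolding intS_def
        by (rule set_lebesgue_integral_cong) (use tau ll g2alg in auto)
      also have "\<dots> = intS L1 (\<lambda>s. (lap (eta (Suc k)) s)\<^sup>2) - intS L1 (\<lambda>s. (lap (eta k) s)\<^sup>2) + tau * tau * intS L1 (\<lambda>s. (lap (xi k) s)\<^sup>2)"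
      proof -
        have j2: "set_integrable lebesgue {0<..<L1} (\<lambda>s. (lap (eta (Suc k)) s)\<^sup>2)"
          by (rule IS_cont, intro continuous_intros cl)
        have j3: "set_integrable lebesgue {0<..<L1} (\<lambda>s. (lap (eta k) s)\<^sup>2)"
          by (rule IS_cont, intro continuous_intros cl)
        have j4: "set_integrable lebesgue {0<..<L1} (\<lambda>s. (lap (xi k) s)\<^sup>2)"
          by (rule IS_cont, intro continuous_intros cl)
        show ?thesis unfolding intS_def
          by (simp only: set_integral_add(2)[OF set_integral_diff(1)[OF j2 j3] set_integrable_mult_right[OF j4]]
            set_integral_diff(2)[OF j2 j3] set_integral_mult_right)
      qed
      finally show ?thesis using e1 by simp
    qed
    have g3f: "intS L1 (\<lambda>s. dx (xi k) s * dx (xi k) s) = intS L1 (\<lambda>s. (dx (xi k) s)\<^sup>2)"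
      by (simp add: power2_eq_square)
    have R2': "rho_f * intO L1 (\<lambda>x. inner ((1/tau) *\<^sub>R (u k x - u (k-1) x)) (u k x) * eta k (x$1))
    + 1/2 * rho_f * intO L1 (\<lambda>x. (eta k (x$1) - eta (k-1) (x$1)) / tau * inner (2 *\<^sub>R u (k-1) x - u k x) (u k x))
    + intO L1 (\<lambda>x. frob ((2*mu) *\<^sub>R symm (grad (u k) x ** matrix_inv (FF (eta k) x)) - p k x *\<^sub>R mat 1)
                        (grad (u k) x ** matrix_inv (FF (eta k) x)) * eta k (x$1))
    + rho_s * intS L1 (\<lambda>s. (xi k s - xi (k-1) s) / tau * xi k s)
    + intS L1 (\<lambda>s. g1 * dx (eta (Suc k)) s * dx (xi k) s + g2 * dx (\<lambda>s. - lap (eta (Suc k)) s) s * dx (xi k) s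
                     + g3 * dx (xi k) s * dx (xi k) s) = 0" using R2 .
    have Sk: "Suc (k-1) = k" using k1 by simp
    show ?thesis
      unfolding E_def V_def energy_def Dnum_def Sk
      by (rule combine[OF R2' fl t4 f5 f6 g1f g2f g3f])
  qed
  have "E m + tau * (\<Sum>k=1..m. V k) = E 0" if "m \<le> N" for m
    using that
  proof (induction m)
    case 0 then show ?case by simp
  next
    case (Suc m)
    then have "E m + tau * (\<Sum>k=1..m. V k) = E 0" by simp
    moreover have "E (Suc m) + tau * V (Suc m) = E m" using step[of "Suc m"] Suc.prems by simp
    ultimately show ?case by (simp add: algebra_simps)
  qed
  then show ?thesis unfolding V_def E_def by auto
qed

end
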